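(* Let $\varepsilon>0$, $\Omega\subset\mathbb{R}^2$ bounded open, $u\in\mathcal{SF}_\varepsilon(\Omega)$, $R\in\mathcal{R}_\varepsilon(u)$, and let $S_R(u)\subseteq\mathbb{S}^2$ be an admissible interpolation surface for $u$ in $R$. Then $S_R(u)$ is either a semi great-circle, or an arc of geodesic, or a geodesic triangle, or the union of two adjacent geodesic triangles, or a hemisphere.
   Context: $\mathcal{L}=\{ae_1+b\hat e_2:a,b\in\mathbb{Z}\}$ with $e_1=(1,0)$, $\hat e_2=\frac12(1,\sqrt3)$, $\mathcal{L}_\varepsilon=\varepsilon\mathcal{L}$, $\mathcal{L}_\varepsilon(R)=\mathcal{L}_\varepsilon\cap R$; $\mathcal{T}_\varepsilon$ is the set of closed triangles with vertices in $\mathcal{L}_\varepsilon$ pairwise at distance $\varepsilon$; $\mathcal{E}_\varepsilon$ the set of segments $[i,j]$, $i,j\in\mathcal{L}_\varepsilon$, $|i-j|=\varepsilon$. $n=(0,0,1)$; $\mathcal{SF}_\varepsilon(\Omega)$ is the set of $u:\mathcal{L}_\varepsilon\to\mathbb{S}^2$ with $u=n$ on $\mathcal{L}_\varepsilon\setminus\Omega$. $\mathcal{N}_\varepsilon(u)=\{[i,j]\in\mathcal{E}_\varepsilon:u(i)=-u(j)\}$. Two triangles of $\mathcal{T}_\varepsilon$ are neighbours if their intersection is an edge in $\mathcal{N}_\varepsilon(u)$, connected if joined by a finite chain of neighbours; $\mathcal{R}_\varepsilon(u)$ is the set of unions of pairwise connected triangles maximal under inclusion. $\mathrm{cone}_R(u)=\{\sum_{w\in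 u(\mathcal{L}_\varepsilon(R))}\lambda_ww:\lambda_w\ge0\}$. $S_R(u)$ is an admissible interpolation surface for $u$ in $R$ if: when $\mathrm{cone}_R(u)$ is not a linear subspace of $\mathbb{R}^3$, $S_R(u)=\{v/|v|: v=\sum_w\lambda_ww,\ \lambda_w\ge0,\ \sum_w\lambda_w>0\}$; when it is a linear subspace, $S_R(u)=\{v/|v|:v=\sum_w\lambda_ww+\tau h,\ \lambda_w,\tau\ge0,\ \sum_w\lambda_w+\tau>0\}$ for some $h\in\mathbb{S}^2$ orthogonal to $\mathrm{cone}_R(u)$ (sums over $w\in u(\mathcal{L}_\varepsilon(R))$). A geodesic triangle with linearly independent vertices $p_1,p_2,p_3\in\mathbb{S}^2$ is $\{\sum\lambda_ip_i/|\sum\lambda_ip_i|:\lambda_i>0\}$; a hemisphere is a set $\{q\in\mathbb{S}^2:q\cdot h>0\}$ (possibly with its boundary great circle). *)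

theory Defs
  imports "HOL-Analysis.Analysis"
begin

definition e1 :: "real^2" where "e1 = vector [1, 0]"
definition e2h :: "real^2" where "e2h = vector [1/2, sqrt 3 / 2]"

definition lattice :: "real \<Rightarrow> (real^2) set" where
  "lattice \<epsilon> = {\<epsilon> *\<^sub>R (of_int a *\<^sub>R e1 + of_int b *\<^sub>R e2h) | a b :: int. True}"

definition lattice_in :: "real \<Rightarrow> (real^2) set \<Rightarrow> (real^2) set" where
  "lattice_in \<epsilon> R = lattice \<epsilon> \<inter> R"

definition triangles :: "real \<Rightarrow> (real^2) set set" where
  "triangles \<epsilon> = {convex hull {i, j, k} | i j k.
      i \<in> lattice \<epsilon> \<and> j \<in> lattice \<epsilon> \<and> k \<in> lattice \<epsilon> \<and>
      dist i j = \<epsilon> \<and> dist j k = \<epsilon> \<and> dist i k = \<epsilon>}"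

definition edges :: "real \<Rightarrow> (real^2) set set" where
  "edges \<epsilon> = {closed_segment i j | i j. i \<in> lattice \<epsilon> \<and> j \<in> lattice \<epsilon> \<and> dist i j = \<epsilon>}"

definition north :: "real^3" where "north = vector [0, 0, 1]"

text \<open>Spin fields: only the values on the lattice matter.\<close>
definition SF :: "real \<Rightarrow> (real^2) set \<Rightarrow> ((real^2) \<Rightarrow> real^3) set" where
  "SF \<epsilon> \<Omega> = {u. (\<forall>i\<in>lattice \<epsilon>. u i \<in> sphere 0 1) \<and> (\<forall>i\<in>lattice \<epsilon> - \<Omega>. u i = north)}"

definition Nedges :: "real \<Rightarrow> ((real^2) \<Rightarrow> real^3) \<Rightarrow> (real^2) set set" where
  "Nedges \<epsilon> u = {closed_segment i j | i j.
      i \<in> lattice \<epsilon> \<and> j \<in> lattice \<epsilon> \<and> dist i j = \<epsilon> \<and> u i = - u j}"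

definition neighbours :: "real \<Rightarrow> ((real^2) \<Rightarrow> real^3) \<Rightarrow> (real^2) set \<Rightarrow> (real^2) set \<Rightarrow> bool" where
  "neighbours \<epsilon> u T T' \<longleftrightarrow> T \<in> triangles \<epsilon> \<and> T' \<in> triangles \<epsilon> \<and> T \<inter> T' \<in> Nedges \<epsilon> u"

definition tri_connected :: "real \<Rightarrow> ((real^2) \<Rightarrow> real^3) \<Rightarrow> (real^2) set \<Rightarrow> (real^2) set \<Rightarrow> bool" where
  "tri_connected \<epsilon> u T T' \<longleftrightarrow> T \<in> triangles \<epsilon> \<and> T' \<in> triangles \<epsilon> \<and> (neighbours \<epsilon> u)\<^sup>*\<^sup>* T T'"

definition pairwise_tri_connected :: "real \<Rightarrow> ((real^2) \<Rightarrow> real^3) \<Rightarrow> (real^2) set set \<Rightarrow> bool" where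
  "pairwise_tri_connected \<epsilon> u F \<longleftrightarrow> F \<subseteq> triangles \<epsilon> \<and> (\<forall>T\<in>F. \<forall>T'\<in>F. tri_connected \<epsilon> u T T')"

definition regions :: "real \<Rightarrow> ((real^2) \<Rightarrow> real^3) \<Rightarrow> (real^2) set set" where
  "regions \<epsilon> u = {\<Union>F | F. F \<noteq> {} \<and> pairwise_tri_connected \<epsilon> u F \<and>
      (\<forall>F'. pairwise_tri_connected \<epsilon> u F' \<and> \<Union>F \<subseteq> \<Union>F' \<longrightarrow> \<Union>F' = \<Union>F)}"

definition coneR :: "real \<Rightarrow> ((real^2) \<Rightarrow> real^3) \<Rightarrow> (real^2) set \<Rightarrow> (real^3) set" where
  "coneR \<epsilon> u R = (let W = u ` lattice_in \<epsilon> R in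
      {(\<Sum>w\<in>W. l w *\<^sub>R w) | l. \<forall>w\<in>W. l w \<ge> 0})"

definition admissible_surface ::
  "real \<Rightarrow> ((real^2) \<Rightarrow> real^3) \<Rightarrow> (real^2) set \<Rightarrow> (real^3) set \<Rightarrow> bool" where
  "admissible_surface \<epsilon> u R S \<longleftrightarrow>
    (let W = u ` lattice_in \<epsilon> R; C = coneR \<epsilon> u R in
     if \<not> subspace C then
       S = {inverse (norm v) *\<^sub>R v | v. v \<noteq> 0 \<and> (\<exists>l. (\<forall>w\<in>W. l w \<ge> 0) \<and>
              (\<Sum>w\<in>W. l w) > 0 \<and> v = (\<Sum>w\<in>W. l w *\<^sub>R w))}
     else
       (\<exists>h. norm h = 1 \<and> (\<forall>c\<in>C. h \<bullet> c = 0) \<and>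
          S = {inverse (norm v) *\<^sub>R v | v. v \<noteq> 0 \<and> (\<exists>l \<tau>. (\<forall>w\<in>W. l w \<ge> 0) \<and> \<tau> \<ge> 0 \<and>
              (\<Sum>w\<in>W. l w) + \<tau> > 0 \<and> v = (\<Sum>w\<in>W. l w *\<^sub>R w) + \<tau> *\<^sub>R h)}))"

definition semi_great_circle :: "(real^3) set \<Rightarrow> bool" where
  "semi_great_circle S \<longleftrightarrow> (\<exists>p q. norm p = 1 \<and> norm q = 1 \<and> p \<bullet> q = 0 \<and>
      S = {cos t *\<^sub>R p + sin t *\<^sub>R q | t. 0 \<le> t \<and> t \<le> pi})"

text \<open>Closed geodesic arc between non-antipodal points (degenerate arc p = q allowed).\<close>
definition geodesic_arc :: "(real^3) set \<Rightarrow> bool" where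
  "geodesic_arc S \<longleftrightarrow> (\<exists>p q. norm p = 1 \<and> norm q = 1 \<and> p \<noteq> - q \<and>
      S = {inverse (norm v) *\<^sub>R v | v. \<exists>t. 0 \<le> t \<and> t \<le> 1 \<and> v = (1 - t) *\<^sub>R p + t *\<^sub>R q})"

definition geo_tri :: "real^3 \<Rightarrow> real^3 \<Rightarrow> real^3 \<Rightarrow> (real^3) set" where
  "geo_tri p1 p2 p3 = {inverse (norm v) *\<^sub>R v | v. \<exists>a b c. a \<ge> 0 \<and> b \<ge> 0 \<and> c \<ge> 0 \<and>
      a + b + c > 0 \<and> v = a *\<^sub>R p1 + b *\<^sub>R p2 + c *\<^sub>R p3}"

definition sph_indep :: "real^3 \<Rightarrow> real^3 \<Rightarrow> real^3 \<Rightarrow> bool" where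
  "sph_indep p1 p2 p3 \<longleftrightarrow> norm p1 = 1 \<and> norm p2 = 1 \<and> norm p3 = 1 \<and>
      p1 \<noteq> p2 \<and> p1 \<noteq> p3 \<and> p2 \<noteq> p3 \<and> independent {p1, p2, p3}"

definition geodesic_triangle :: "(real^3) set \<Rightarrow> bool" where
  "geodesic_triangle S \<longleftrightarrow> (\<exists>p1 p2 p3. sph_indep p1 p2 p3 \<and> S = geo_tri p1 p2 p3)"

definition two_adjacent_geodesic_triangles :: "(real^3) set \<Rightarrow> bool" where
  "two_adjacent_geodesic_triangles S \<longleftrightarrow> (\<exists>p1 p2 p3 p4 n.
      sph_indep p1 p2 p3 \<and> sph_indep p1 p2 p4 \<and>
      n \<bullet> p1 = 0 \<and> n \<bullet> p2 = 0 \<and> n \<bullet> p3 > 0 \<and> n \<bullet> p4 < 0 \<and>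
      S = geo_tri p1 p2 p3 \<union> geo_tri p1 p2 p4)"

definition hemisphere :: "(real^3) set \<Rightarrow> bool" where
  "hemisphere S \<longleftrightarrow> (\<exists>h. norm h = 1 \<and>
      (S = {q \<in> sphere 0 1. q \<bullet> h > 0} \<or> S = {q \<in> sphere 0 1. q \<bullet> h \<ge> 0}))"

end

theory Submission
  imports Defs "HOL-Analysis.Cross3"
begin


lemma e_inner: "e1 \<bullet> e1 = 1" "e2h \<bullet> e2h = 1" "e1 \<bullet> e2h = 1/2"
  by (auto simp: e1_def e2h_def inner_vec_def sum_2 power2_eq_square)

lemma lat_norm2: "(norm (of_int a *\<^sub>R e1 + of_int b *\<^sub>R e2h))\<^sup>2 = of_int (a*a + a*b + b*b)"
proof -
  have "(norm (of_int a *\<^sub>R e1 + of_int b *\<^sub>R e2h))\<^sup>2 =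
     (of_int a *\<^sub>R e1 + of_int b *\<^sub>R e2h) \<bullet> (of_int a *\<^sub>R e1 + of_int b *\<^sub>R e2h)"
    by (simp add: power2_norm_eq_inner)
  also have "\<dots> = of_int a * of_int a * (e1 \<bullet> e1) + 2 * of_int a * of_int b * (e1 \<bullet> e2h)
       + of_int b * of_int b * (e2h \<bullet> e2h)"
    by (simp add: inner_add_left inner_add_right inner_commute algebra_simps)
  also have "\<dots> = of_int (a*a + a*b + b*b)" by (simp add: e_inner)
  finally show ?thesis .
qed

lemma sq_ge1: "(a::int) \<noteq> 0 \<Longrightarrow> a*a \<ge> 1"
proof -
  assume "a \<noteq> 0"
  hence "a*a > 0" by (auto simp add: zero_less_mult_iff linorder_neq_iff)
  thus ?thesis by linarith
qed

lemma int_quad_pos: "(a::int) \<noteq> 0 \<or> b \<noteq> 0 \<Longrightarrow> a*a + a*b + b*b \<ge> 1"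
proof -
  assume h: "a \<noteq> 0 \<or> b \<noteq> 0"
  have "a*a \<ge> 0" "b*b \<ge> 0" by simp_all
  hence "a*a + b*b \<ge> 1" using h sq_ge1[of a] sq_ge1[of b] by linarith
  moreover have "(a+b)*(a+b) \<ge> 0" by simp
  moreover have "2*(a*a + a*b + b*b) = (a*a+b*b) + (a+b)*(a+b)" by (simp add: algebra_simps)
  ultimately have "2*(a*a + a*b + b*b) \<ge> 1" by linarith
  moreover have "\<And>m::int. 1 \<le> 2*m \<Longrightarrow> 1 \<le> m" by presburger
  ultimately show ?thesis by blast
qed

lemma quad_exp: "(b *\<^sub>R u + c *\<^sub>R v) \<bullet> (b *\<^sub>R u + c *\<^sub>R v) = b*b*(u \<bullet> u) + 2*b*c*(u \<bullet> v) + c*c*(v \<bullet> v)"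
  for u v :: "'a::real_inner"
  by (simp add: inner_add_left inner_add_right inner_commute algebra_simps)

lemma lat_sep:
  assumes "\<epsilon> > 0" "x \<in> lattice \<epsilon>" "y \<in> lattice \<epsilon>" "x \<noteq> y"
  shows "(norm (x - y))\<^sup>2 \<ge> \<epsilon>\<^sup>2"
proof -
  obtain a b where x: "x = \<epsilon> *\<^sub>R (of_int a *\<^sub>R e1 + of_int b *\<^sub>R e2h)" using assms(2) by (auto simp: lattice_def)
  obtain c d where y: "y = \<epsilon> *\<^sub>R (of_int c *\<^sub>R e1 + of_int d *\<^sub>R e2h)" using assms(3) by (auto simp: lattice_def)
  have xy: "x - y = \<epsilon> *\<^sub>R (of_int (a-c) *\<^sub>R e1 + of_int (b-d) *\<^sub>R e2h)"
    by (simp add: x y algebra_simps)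
  have "a - c \<noteq> 0 \<or> b - d \<noteq> 0"
  proof (rule ccontr)
    assume "\<not> (a - c \<noteq> 0 \<or> b - d \<noteq> 0)"
    hence "a = c" "b = d" by auto
    thus False using assms(4) unfolding x y by simp
  qed
  hence q: "(a-c)*(a-c) + (a-c)*(b-d) + (b-d)*(b-d) \<ge> 1" by (rule int_quad_pos)
  define v where "v = of_int (a-c) *\<^sub>R e1 + of_int (b-d) *\<^sub>R e2h"
  have nv: "(norm v)\<^sup>2 = of_int ((a-c)*(a-c) + (a-c)*(b-d) + (b-d)*(b-d))"
    unfolding v_def by (rule lat_norm2)
  have "norm (x - y) = \<epsilon> * norm v" using assms(1) by (simp add: xy v_def)
  hence "(norm (x - y))\<^sup>2 = \<epsilon>\<^sup>2 * (norm v)\<^sup>2" by (simp add: power_mult_distrib)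
  hence nxy: "(norm (x - y))\<^sup>2 = \<epsilon>\<^sup>2 * of_int ((a-c)*(a-c) + (a-c)*(b-d) + (b-d)*(b-d))"
    using nv by simp
  have q': "(1::real) \<le> of_int ((a-c)*(a-c) + (a-c)*(b-d) + (b-d)*(b-d))"
    using q by (metis of_int_1 of_int_le_iff)
  have "\<epsilon>\<^sup>2 * 1 \<le> \<epsilon>\<^sup>2 * of_int ((a-c)*(a-c) + (a-c)*(b-d) + (b-d)*(b-d))"
    using q' by (intro mult_left_mono) auto
  thus ?thesis using nxy by simp
qed

lemma lat_in_tri:
  assumes "\<epsilon> > 0" "i \<in> lattice \<epsilon>" "j \<in> lattice \<epsilon>" "k \<in> lattice \<epsilon>"
    "dist i j = \<epsilon>" "dist j k = \<epsilon>" "dist i k = \<epsilon>"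
    "x \<in> lattice \<epsilon>" "x \<in> convex hull {i,j,k}"
  shows "x = i \<or> x = j \<or> x = k"
proof (rule ccontr)
  assume nx: "\<not> (x = i \<or> x = j \<or> x = k)"
  obtain a b c where abc: "a \<ge> 0" "b \<ge> 0" "c \<ge> 0" "a + b + c = 1"
    and xe: "x = a *\<^sub>R i + b *\<^sub>R j + c *\<^sub>R k"
    using assms(9) by (auto simp: convex_hull_3)
  have d1: "(j - i) \<bullet> (j - i) = \<epsilon>\<^sup>2" using assms(5)
    by (simp add: dist_norm power2_norm_eq_inner[symmetric] norm_minus_commute)
  have d2: "(k - i) \<bullet> (k - i) = \<epsilon>\<^sup>2" using assms(7)
    by (simp add: dist_norm power2_norm_eq_inner[symmetric] norm_minus_commute)
  have d3: "(k - j) \<bullet> (k - j) = \<epsilon>\<^sup>2" using assms(6)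
    by (simp add: dist_norm power2_norm_eq_inner[symmetric] norm_minus_commute)
  have "k - j = (k - i) - (j - i)" by simp
  hence "(k - j) \<bullet> (k - j) = (k - i) \<bullet> (k - i) + (j - i) \<bullet> (j - i) - 2 * ((j - i) \<bullet> (k - i))"
    by (simp add: inner_diff_left inner_diff_right inner_commute)
  hence d4: "(j - i) \<bullet> (k - i) = \<epsilon>\<^sup>2 / 2" using d1 d2 d3 by simp
  have a: "a = 1 - b - c" using abc(4) by simp
  have xi: "x - i = b *\<^sub>R (j - i) + c *\<^sub>R (k - i)"
    by (simp add: xe a algebra_simps)
  have "(norm (x - i))\<^sup>2 = (b *\<^sub>R (j - i) + c *\<^sub>R (k - i)) \<bullet> (b *\<^sub>R (j - i) + c *\<^sub>R (k - i))"
    by (simp add: xi power2_norm_eq_inner)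
  also have "\<dots> = b*b*((j - i) \<bullet> (j - i)) + 2*b*c*((j - i) \<bullet> (k - i)) + c*c*((k - i) \<bullet> (k - i))"
    by (rule quad_exp)
  also have "\<dots> = \<epsilon>\<^sup>2 * (b*b + b*c + c*c)" by (simp only: d1 d2 d4) (simp add: algebra_simps)
  finally have n: "(norm (x - i))\<^sup>2 = \<epsilon>\<^sup>2 * (b*b + b*c + c*c)" .
  have "(norm (x - i))\<^sup>2 \<ge> \<epsilon>\<^sup>2" using lat_sep[OF assms(1) assms(8) assms(2)] nx by auto
  hence "b*b + b*c + c*c \<ge> 1" using n assms(1) by (simp add: mult_le_cancel_left1)
  moreover have "b + c \<le> 1" using abc by simp
  ultimately have bc1: "b*b + b*c + c*c \<ge> 1" "b + c \<le> 1" by auto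
  have bc0: "b*c \<ge> 0" using abc by simp
  have "(b+c)*(b+c) \<le> (b+c)" using mult_left_mono[of "b+c" 1 "b+c"] bc1(2) abc by simp
  hence "(b+c)*(b+c) \<le> 1" using bc1(2) by linarith
  moreover have "(b+c)*(b+c) = b*b + 2*(b*c) + c*c" by (simp add: algebra_simps)
  ultimately have "b*c = 0" using bc1 bc0 by linarith
  moreover have "b + c = 1"
  proof -
    have "(b+c)*(b+c) = b*b + 2*(b*c) + c*c" by (simp add: algebra_simps)
    hence "(b+c)*(b+c) \<ge> 1" using bc1 bc0 by linarith
    moreover have "(b+c)*(b+c) \<le> (b+c)" using mult_left_mono[of "b+c" 1 "b+c"] bc1(2) abc by simp
    ultimately show ?thesis using bc1(2) by linarith
  qed
  ultimately have "b*c = 0 \<and> b + c = 1" by simp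
  hence "(b = 0 \<and> c = 1) \<or> (b = 1 \<and> c = 0)" by auto
  hence "x = j \<or> x = k" unfolding xe a by auto
  thus False using nx by blast
qed

lemma comb:
  assumes "\<epsilon> > 0" "R \<in> regions \<epsilon> u"
  shows "(\<exists>p. p \<in> u ` lattice_in \<epsilon> R \<and> - p \<in> u ` lattice_in \<epsilon> R) \<or>
         (\<exists>a b c. u ` lattice_in \<epsilon> R = {a,b,c})"
proof -
  obtain F where R: "R = \<Union>F" and Fne: "F \<noteq> {}" and pc: "pairwise_tri_connected \<epsilon> u F"
    using assms(2) unfolding regions_def by blast
  obtain T where T: "T \<in> F" using Fne by blast
  show ?thesis
  proof (cases "\<exists>T'\<in>F. T' \<noteq> T")
    case True
    then obtain T' where T': "T' \<in> F" "T' \<noteq> T" by blast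
    have "(neighbours \<epsilon> u)\<^sup>*\<^sup>* T T'" using pc T T' unfolding pairwise_tri_connected_def tri_connected_def by blast
    then obtain T1 where "neighbours \<epsilon> u T T1"
      using T'(2) by (metis converse_rtranclpE)
    hence "T \<inter> T1 \<in> Nedges \<epsilon> u" unfolding neighbours_def by blast
    then obtain i j where ij: "T \<inter> T1 = closed_segment i j" "i \<in> lattice \<epsilon>" "j \<in> lattice \<epsilon>" "u i = - u j"
      unfolding Nedges_def by blast
    have "i \<in> R" "j \<in> R" using ij(1) T R by auto
    hence "u i \<in> u ` lattice_in \<epsilon> R" "u j \<in> u ` lattice_in \<epsilon> R"
      using ij(2,3) unfolding lattice_in_def by blast+
    thus ?thesis using ij(4) by (metis minus_minus)
  next
    case False
    hence "F = {T}" using T by blast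
    hence RT: "R = T" using R by simp
    have "T \<in> triangles \<epsilon>" using pc T unfolding pairwise_tri_connected_def by blast
    then obtain i j k where T3: "T = convex hull {i,j,k}" "i \<in> lattice \<epsilon>" "j \<in> lattice \<epsilon>" "k \<in> lattice \<epsilon>"
      "dist i j = \<epsilon>" "dist j k = \<epsilon>" "dist i k = \<epsilon>"
      unfolding triangles_def by blast
    have "lattice_in \<epsilon> R = {i,j,k}"
    proof
      show "lattice_in \<epsilon> R \<subseteq> {i,j,k}"
        using lat_in_tri[OF assms(1) T3(2-7)] unfolding lattice_in_def RT T3(1) by blast
      show "{i,j,k} \<subseteq> lattice_in \<epsilon> R"
        using T3 unfolding lattice_in_def RT by (auto intro: hull_inc)
    qed
    hence "u ` lattice_in \<epsilon> R = {u i, u j, u k}" by simp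
    thus ?thesis by blast
  qed
qed

lemma W_sphere:
  assumes "u \<in> SF \<epsilon> \<Omega>"
  shows "u ` lattice_in \<epsilon> R \<subseteq> sphere 0 1"
  using assms unfolding SF_def lattice_in_def by auto


definition cone_of :: "(real^3) set \<Rightarrow> (real^3) set" where
  "cone_of W = {(\<Sum>w\<in>W. l w *\<^sub>R w) | l. \<forall>w\<in>W. l w \<ge> 0}"

definition nrm :: "(real^3) set \<Rightarrow> (real^3) set" where
  "nrm K = {inverse (norm v) *\<^sub>R v | v. v \<in> K \<and> v \<noteq> 0}"

definition adm :: "(real^3) set \<Rightarrow> (real^3) set \<Rightarrow> bool" where
  "adm W S \<longleftrightarrow> (if \<not> subspace (cone_of W) then S = nrm (cone_of W)
     else (\<exists>h. norm h = 1 \<and> (\<forall>c\<in>cone_of W. h \<bullet> c = 0) \<and>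
        S = nrm {c + \<tau> *\<^sub>R h | c \<tau>. c \<in> cone_of W \<and> \<tau> \<ge> 0}))"

definition shapes :: "(real^3) set \<Rightarrow> bool" where
  "shapes S \<longleftrightarrow> semi_great_circle S \<or> geodesic_arc S \<or> geodesic_triangle S \<or>
         two_adjacent_geodesic_triangles S \<or> hemisphere S"

lemma sum_pos_of_nz:
  assumes "\<forall>w\<in>W. l w \<ge> 0" "(\<Sum>w\<in>W. l w *\<^sub>R w) \<noteq> (0::real^3)"
  shows "(\<Sum>w\<in>W. l w) > 0"
proof (cases "finite W")
  case True
  have ge: "(\<Sum>w\<in>W. l w) \<ge> 0" using assms(1) by (simp add: sum_nonneg)
  have "(\<Sum>w\<in>W. l w) \<noteq> 0"
  proof
    assume "(\<Sum>w\<in>W. l w) = 0"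
    hence "\<forall>w\<in>W. l w = 0" using sum_nonneg_eq_0_iff[OF True] assms(1) by blast
    hence "(\<Sum>w\<in>W. l w *\<^sub>R w) = 0" by simp
    thus False using assms(2) by simp
  qed
  thus ?thesis using ge by simp
next
  case False
  thus ?thesis using assms(2) by simp
qed

lemma adm_of:
  assumes "admissible_surface \<epsilon> u R S"
  shows "adm (u ` lattice_in \<epsilon> R) S"
proof -
  define W where "W = u ` lattice_in \<epsilon> R"
  have C: "coneR \<epsilon> u R = cone_of W" unfolding coneR_def cone_of_def W_def Let_def by simp
  have A: "{inverse (norm v) *\<^sub>R v | v. v \<noteq> 0 \<and> (\<exists>l. (\<forall>w\<in>W. l w \<ge> 0) \<and>
              (\<Sum>w\<in>W. l w) > 0 \<and> v = (\<Sum>w\<in>W. l w *\<^sub>R w))} = nrm (cone_of W)"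
    unfolding nrm_def cone_of_def using sum_pos_of_nz by blast
  have B: "{inverse (norm v) *\<^sub>R v | v. v \<noteq> 0 \<and> (\<exists>l \<tau>. (\<forall>w\<in>W. l w \<ge> 0) \<and> \<tau> \<ge> 0 \<and>
              (\<Sum>w\<in>W. l w) + \<tau> > 0 \<and> v = (\<Sum>w\<in>W. l w *\<^sub>R w) + \<tau> *\<^sub>R h)} =
         nrm {c + \<tau> *\<^sub>R h | c \<tau>. c \<in> cone_of W \<and> \<tau> \<ge> 0}" for h
  proof -
    have "(\<exists>l \<tau>. (\<forall>w\<in>W. l w \<ge> 0) \<and> \<tau> \<ge> 0 \<and>
              (\<Sum>w\<in>W. l w) + \<tau> > 0 \<and> v = (\<Sum>w\<in>W. l w *\<^sub>R w) + \<tau> *\<^sub>R h) \<longleftrightarrow>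
          (\<exists>c \<tau>. v = c + \<tau> *\<^sub>R h \<and> c \<in> cone_of W \<and> \<tau> \<ge> 0)" if "v \<noteq> 0" for v
    proof
      assume "\<exists>l \<tau>. (\<forall>w\<in>W. l w \<ge> 0) \<and> \<tau> \<ge> 0 \<and>
              (\<Sum>w\<in>W. l w) + \<tau> > 0 \<and> v = (\<Sum>w\<in>W. l w *\<^sub>R w) + \<tau> *\<^sub>R h"
      thus "\<exists>c \<tau>. v = c + \<tau> *\<^sub>R h \<and> c \<in> cone_of W \<and> \<tau> \<ge> 0"
        unfolding cone_of_def by blast
    next
      assume "\<exists>c \<tau>. v = c + \<tau> *\<^sub>R h \<and> c \<in> cone_of W \<and> \<tau> \<ge> 0"
      then obtain l \<tau> where l: "\<forall>w\<in>W. l w \<ge> 0" "\<tau> \<ge> 0" "v = (\<Sum>w\<in>W. l w *\<^sub>R w) + \<tau> *\<^sub>R h"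
        unfolding cone_of_def by blast
      have "(\<Sum>w\<in>W. l w) + \<tau> > 0"
      proof (cases "\<tau> > 0")
        case True
        have "(\<Sum>w\<in>W. l w) \<ge> 0" using l(1) by (simp add: sum_nonneg)
        thus ?thesis using True by simp
      next
        case False
        hence "\<tau> = 0" using l(2) by simp
        hence "(\<Sum>w\<in>W. l w *\<^sub>R w) \<noteq> 0" using l(3) that by simp
        hence "(\<Sum>w\<in>W. l w) > 0" using sum_pos_of_nz l(1) by blast
        thus ?thesis using \<open>\<tau> = 0\<close> by simp
      qed
      thus "\<exists>l \<tau>. (\<forall>w\<in>W. l w \<ge> 0) \<and> \<tau> \<ge> 0 \<and>
              (\<Sum>w\<in>W. l w) + \<tau> > 0 \<and> v = (\<Sum>w\<in>W. l w *\<^sub>R w) + \<tau> *\<^sub>R h"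
        using l by blast
    qed
    thus ?thesis unfolding nrm_def by blast
  qed
  have H: "if \<not> subspace (cone_of W) then S = {inverse (norm v) *\<^sub>R v | v. v \<noteq> 0 \<and> (\<exists>l. (\<forall>w\<in>W. l w \<ge> 0) \<and>
              (\<Sum>w\<in>W. l w) > 0 \<and> v = (\<Sum>w\<in>W. l w *\<^sub>R w))}
     else
       (\<exists>h. norm h = 1 \<and> (\<forall>c\<in>cone_of W. h \<bullet> c = 0) \<and>
          S = {inverse (norm v) *\<^sub>R v | v. v \<noteq> 0 \<and> (\<exists>l \<tau>. (\<forall>w\<in>W. l w \<ge> 0) \<and> \<tau> \<ge> 0 \<and>
              (\<Sum>w\<in>W. l w) + \<tau> > 0 \<and> v = (\<Sum>w\<in>W. l w *\<^sub>R w) + \<tau> *\<^sub>R h)})"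
    using assms[unfolded admissible_surface_def Let_def, folded W_def, unfolded C] .
  have "adm W S"
  proof (cases "subspace (cone_of W)")
    case True
    then obtain h where "norm h = 1" "\<forall>c\<in>cone_of W. h \<bullet> c = 0"
      "S = {inverse (norm v) *\<^sub>R v | v. v \<noteq> 0 \<and> (\<exists>l \<tau>. (\<forall>w\<in>W. l w \<ge> 0) \<and> \<tau> \<ge> 0 \<and>
              (\<Sum>w\<in>W. l w) + \<tau> > 0 \<and> v = (\<Sum>w\<in>W. l w *\<^sub>R w) + \<tau> *\<^sub>R h)}"
      using H True by (simp only: not_True_eq_False not_not if_False) blast
    thus ?thesis unfolding adm_def using True B[of h] by (simp only: not_True_eq_False not_not if_False) blast
  next
    case False
    hence "S = {inverse (norm v) *\<^sub>R v | v. v \<noteq> 0 \<and> (\<exists>l. (\<forall>w\<in>W. l w \<ge> 0) \<and>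
              (\<Sum>w\<in>W. l w) > 0 \<and> v = (\<Sum>w\<in>W. l w *\<^sub>R w))}"
      using H by (simp only: if_True not_False_eq_True)
    thus ?thesis unfolding adm_def using False A by (simp only: if_True not_False_eq_True)
  qed
  thus ?thesis by (simp add: W_def)
qed


lemma cc_sum:
  assumes "convex_cone K" "finite A" "A \<subseteq> K" "\<forall>w\<in>A. l w \<ge> 0"
  shows "(\<Sum>w\<in>A. l w *\<^sub>R w) \<in> K"
  using assms(2,3,4)
proof (induction A rule: finite_induct)
  case empty
  then show ?case using assms(1) by (simp add: convex_cone_iff)
next
  case (insert x F)
  have "l x *\<^sub>R x \<in> K" using insert assms(1) by (simp add: convex_cone_iff)
  moreover have "(\<Sum>w\<in>F. l w *\<^sub>R w) \<in> K" using insert by simp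
  ultimately show ?case using insert assms(1) by (simp add: convex_cone_iff)
qed

lemma cone_of_cc: "convex_cone (cone_of W)"
  unfolding convex_cone_iff
proof (intro conjI ballI allI impI)
  show "0 \<in> cone_of W" unfolding cone_of_def by (rule CollectI, rule exI[of _ "\<lambda>_. 0"]) simp
next
  fix x y assume "x \<in> cone_of W" "y \<in> cone_of W"
  then obtain l1 l2 where "\<forall>w\<in>W. l1 w \<ge> 0" "x = (\<Sum>w\<in>W. l1 w *\<^sub>R w)"
     "\<forall>w\<in>W. l2 w \<ge> 0" "y = (\<Sum>w\<in>W. l2 w *\<^sub>R w)" unfolding cone_of_def by blast
  thus "x + y \<in> cone_of W" unfolding cone_of_def
    by (intro CollectI exI[of _ "\<lambda>w. l1 w + l2 w"]) (auto simp: scaleR_add_left sum.distrib)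
next
  fix x and c :: real assume "x \<in> cone_of W" "c \<ge> 0"
  then obtain l1 where "\<forall>w\<in>W. l1 w \<ge> 0" "x = (\<Sum>w\<in>W. l1 w *\<^sub>R w)" unfolding cone_of_def by blast
  thus "c *\<^sub>R x \<in> cone_of W" unfolding cone_of_def using \<open>c \<ge> 0\<close>
    by (intro CollectI exI[of _ "\<lambda>w. c * l1 w"]) (auto simp: scaleR_sum_right)
qed

lemma cone_of_mem: "finite W \<Longrightarrow> w \<in> W \<Longrightarrow> w \<in> cone_of W"
proof -
  assume "finite W" "w \<in> W"
  have "(\<Sum>v\<in>W. (if v = w then 1 else 0) *\<^sub>R v) = (\<Sum>v\<in>W. if v = w then v else 0)"
    by (rule sum.cong) auto
  also have "\<dots> = w" using \<open>finite W\<close> \<open>w \<in> W\<close> by (simp add: sum.delta')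
  finally show ?thesis unfolding cone_of_def
    by (intro CollectI exI[of _ "\<lambda>v. if v = w then 1 else 0"]) auto
qed

lemma cone_of_sub: "convex_cone K \<Longrightarrow> finite W \<Longrightarrow> W \<subseteq> K \<Longrightarrow> cone_of W \<subseteq> K"
  unfolding cone_of_def using cc_sum by blast

lemma cone_of_hull: "finite W \<Longrightarrow> cone_of W = convex_cone hull W"
  apply (rule antisym)
   apply (rule cone_of_sub[OF convex_cone_convex_cone_hull]; simp add: hull_subset)
  apply (rule hull_minimal)
   apply (auto simp: cone_of_mem cone_of_cc)
  done

lemma cone_of_closed: "finite W \<Longrightarrow> closed (cone_of W)"
  by (simp add: cone_of_hull closed_convex_cone_hull)

lemma cone_of_add: "x \<in> cone_of W \<Longrightarrow> y \<in> cone_of W \<Longrightarrow> x + y \<in> cone_of W"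
  using cone_of_cc by (simp add: convex_cone_iff)
lemma cone_of_scale: "x \<in> cone_of W \<Longrightarrow> c \<ge> 0 \<Longrightarrow> c *\<^sub>R x \<in> cone_of W"
  using cone_of_cc by (simp add: convex_cone_iff)
lemma cone_of_0: "0 \<in> cone_of W"
  using cone_of_cc by (simp add: convex_cone_iff)

lemma cone_of_inf: "\<not> finite W \<Longrightarrow> cone_of W = {0}"
  unfolding cone_of_def by auto

lemma indep3I:
  fixes a b c :: "real^3"
  assumes "a \<noteq> b" "a \<noteq> c" "b \<noteq> c"
    "\<And>\<alpha> \<beta> \<gamma>. \<alpha> *\<^sub>R a + \<beta> *\<^sub>R b + \<gamma> *\<^sub>R c = 0 \<Longrightarrow> \<alpha> = 0 \<and> \<beta> = 0 \<and> \<gamma> = 0"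
  shows "independent {a,b,c}"
  unfolding independent_explicit
proof (intro conjI allI impI ballI)
  show "finite {a,b,c}" by simp
next
  fix u :: "real^3 \<Rightarrow> real" and v
  assume "(\<Sum>v\<in>{a,b,c}. u v *\<^sub>R v) = 0" "v \<in> {a,b,c}"
  hence "u a *\<^sub>R a + u b *\<^sub>R b + u c *\<^sub>R c = 0" using assms(1-3) by (simp add: add.assoc)
  hence "u a = 0 \<and> u b = 0 \<and> u c = 0" using assms(4) by blast
  thus "u v = 0" using \<open>v \<in> {a,b,c}\<close> by auto
qed

lemma indep3D:
  fixes a b c :: "real^3"
  assumes "independent {a,b,c}" "a \<noteq> b" "a \<noteq> c" "b \<noteq> c"
    "\<alpha> *\<^sub>R a + \<beta> *\<^sub>R b + \<gamma> *\<^sub>R c = 0"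
  shows "\<alpha> = 0 \<and> \<beta> = 0 \<and> \<gamma> = 0"
proof -
  define u where "u v = (if v = a then \<alpha> else if v = b then \<beta> else \<gamma>)" for v
  have "(\<Sum>v\<in>{a,b,c}. u v *\<^sub>R v) = 0" using assms(2-5) by (simp add: u_def add.assoc)
  hence "\<forall>v\<in>{a,b,c}. u v = 0" using assms(1) unfolding independent_explicit by blast
  thus ?thesis using assms(2-4) by (auto simp: u_def)
qed

lemma onb3:
  fixes p f n x :: "real^3"
  assumes "norm p = 1" "norm f = 1" "norm n = 1" "p \<bullet> f = 0" "p \<bullet> n = 0" "f \<bullet> n = 0"
  shows "x = (x \<bullet> p) *\<^sub>R p + (x \<bullet> f) *\<^sub>R f + (x \<bullet> n) *\<^sub>R n"
proof -
  have pp: "p \<bullet> p = 1" "f \<bullet> f = 1" "n \<bullet> n = 1" using assms(1-3) by (simp_all add: norm_eq_1)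
  have d: "p \<noteq> f" "p \<noteq> n" "f \<noteq> n" using pp assms(4-6) by auto
  have ind: "independent {p,f,n}"
  proof (rule indep3I[OF d])
    fix \<alpha> \<beta> \<gamma> assume e: "\<alpha> *\<^sub>R p + \<beta> *\<^sub>R f + \<gamma> *\<^sub>R n = 0"
    have A: "p \<bullet> (\<alpha> *\<^sub>R p + \<beta> *\<^sub>R f + \<gamma> *\<^sub>R n) = \<alpha>" "f \<bullet> (\<alpha> *\<^sub>R p + \<beta> *\<^sub>R f + \<gamma> *\<^sub>R n) = \<beta>"
      "n \<bullet> (\<alpha> *\<^sub>R p + \<beta> *\<^sub>R f + \<gamma> *\<^sub>R n) = \<gamma>"
      using pp assms(4-6) by (simp_all add: inner_add_right inner_commute)
    thus "\<alpha> = 0 \<and> \<beta> = 0 \<and> \<gamma> = 0" using e by (metis inner_zero_right)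
  qed
  have "card {p,f,n} = 3" using d by simp
  hence "UNIV \<subseteq> span {p,f,n}"
    by (intro card_ge_dim_independent[OF _ ind]) simp_all
  hence "x \<in> span {p,f,n}" by blast
  then obtain u where "x = (\<Sum>v\<in>{p,f,n}. u v *\<^sub>R v)" by (auto simp: span_finite)
  hence xe: "x = u p *\<^sub>R p + u f *\<^sub>R f + u n *\<^sub>R n" using d by (simp add: add.assoc)
  have o: "f \<bullet> p = 0" "n \<bullet> p = 0" "n \<bullet> f = 0" using assms(4-6) by (simp_all add: inner_commute)
  have "x \<bullet> p = u p" "x \<bullet> f = u f" "x \<bullet> n = u n" unfolding xe
    using pp assms(4-6) o by (simp_all add: inner_add_left)
  thus ?thesis using xe by simp
qed


definition HP :: "real^3 \<Rightarrow> real^3 \<Rightarrow> (real^3) set" where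
  "HP p q = {a *\<^sub>R p + b *\<^sub>R q | a b. b \<ge> 0}"
definition cone2 :: "real^3 \<Rightarrow> real^3 \<Rightarrow> (real^3) set" where
  "cone2 x y = {a *\<^sub>R x + b *\<^sub>R y | a b. a \<ge> 0 \<and> b \<ge> 0}"
definition cone3 :: "real^3 \<Rightarrow> real^3 \<Rightarrow> real^3 \<Rightarrow> (real^3) set" where
  "cone3 x y z = {a *\<^sub>R x + b *\<^sub>R y + c *\<^sub>R z | a b c. a \<ge> 0 \<and> b \<ge> 0 \<and> c \<ge> 0}"

lemma nrm_scale: "c > 0 \<Longrightarrow> inverse (norm (c *\<^sub>R v)) *\<^sub>R (c *\<^sub>R v) = inverse (norm v) *\<^sub>R (v::real^3)"
  by simp

lemma nrm_unit: "norm v = 1 \<Longrightarrow> inverse (norm v) *\<^sub>R v = v"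
  by simp

lemma norm_of_unit_nz: "v \<noteq> 0 \<Longrightarrow> norm (inverse (norm v) *\<^sub>R (v::real^3)) = 1"
  by simp

lemma nrm_Un: "nrm (A \<union> B) = nrm A \<union> nrm B"
  unfolding nrm_def by blast

lemma inner2: "(a *\<^sub>R p + b *\<^sub>R q) \<bullet> (a *\<^sub>R p + b *\<^sub>R q) = a*a*(p \<bullet> p) + 2*a*b*(p \<bullet> q) + b*b*(q \<bullet> q)"
  for p q :: "real^3"
  by (simp add: inner_add_left inner_add_right inner_commute algebra_simps)

lemma nrm_semi:
  assumes "norm p = 1" "norm q = 1" "p \<bullet> q = 0"
  shows "semi_great_circle (nrm (HP p q))"
  unfolding semi_great_circle_def
proof (intro exI conjI)
  show "norm p = 1" "norm q = 1" "p \<bullet> q = 0" by fact+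
  have pp: "p \<bullet> p = 1" "q \<bullet> q = 1" using assms by (simp_all add: norm_eq_1)
  show "nrm (HP p q) = {cos t *\<^sub>R p + sin t *\<^sub>R q | t. 0 \<le> t \<and> t \<le> pi}"
  proof
    show "nrm (HP p q) \<subseteq> {cos t *\<^sub>R p + sin t *\<^sub>R q | t. 0 \<le> t \<and> t \<le> pi}"
    proof
      fix z assume "z \<in> nrm (HP p q)"
      then obtain a b where ab: "b \<ge> 0" "a *\<^sub>R p + b *\<^sub>R q \<noteq> 0"
        "z = inverse (norm (a *\<^sub>R p + b *\<^sub>R q)) *\<^sub>R (a *\<^sub>R p + b *\<^sub>R q)"
        unfolding nrm_def HP_def by blast
      define r where "r = norm (a *\<^sub>R p + b *\<^sub>R q)"
      have r2: "r\<^sup>2 = a*a + b*b" unfolding r_def power2_norm_eq_inner inner2 using pp assms(3) by simp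
      have rpos: "r > 0" using ab(2) r_def by simp
      define c where "c = a / r"
      define s where "s = b / r"
      have "c * c + s * s = (a*a + b*b) / (r*r)" unfolding c_def s_def by (simp add: add_divide_distrib)
      moreover have "r * r = a*a + b*b" using r2 by (simp add: power2_eq_square)
      ultimately have "c * c + s * s = (r*r)/(r*r)" by simp
      hence cs: "c * c + s * s = 1" using rpos by simp
      have s0: "s \<ge> 0" unfolding s_def using ab(1) rpos by simp
      have c1: "-1 \<le> c" "c \<le> 1"
      proof -
        have "s * s \<ge> 0" by simp
        hence "c*c \<le> 1" using cs by linarith
        hence "\<bar>c\<bar> \<le> 1" by (metis abs_le_square_iff abs_mult_self_eq power2_eq_square one_power2 abs_one)
        thus "-1 \<le> c" "c \<le> 1" by auto
      qed
      define t where "t = arccos c"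
      have t: "0 \<le> t" "t \<le> pi" using arccos_bounded[OF c1] t_def by auto
      have ct: "cos t = c" using c1 t_def by simp
      have "sin t = sqrt (1 - c\<^sup>2)" using c1 t_def by (simp add: sin_arccos)
      also have "1 - c\<^sup>2 = s\<^sup>2" using cs by (simp add: power2_eq_square)
      finally have st: "sin t = s" using s0 by simp
      have "z = c *\<^sub>R p + s *\<^sub>R q" unfolding ab(3) r_def[symmetric] c_def s_def
        by (simp add: scaleR_add_right divide_inverse_commute)
      thus "z \<in> {cos t *\<^sub>R p + sin t *\<^sub>R q | t. 0 \<le> t \<and> t \<le> pi}" using t ct st by blast
    qed
  next
    show "{cos t *\<^sub>R p + sin t *\<^sub>R q | t. 0 \<le> t \<and> t \<le> pi} \<subseteq> nrm (HP p q)"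
    proof
      fix z assume "z \<in> {cos t *\<^sub>R p + sin t *\<^sub>R q | t. 0 \<le> t \<and> t \<le> pi}"
      then obtain t where t: "0 \<le> t" "t \<le> pi" "z = cos t *\<^sub>R p + sin t *\<^sub>R q" by blast
      have "z \<bullet> z = 1" unfolding t(3) inner2 using pp assms(3)
        by (simp add: power2_eq_square[symmetric])
      hence nz: "norm z = 1" by (simp add: norm_eq_1)
      have "z \<in> HP p q" unfolding HP_def t(3) using sin_ge_zero[OF t(1,2)] by blast
      moreover have "z \<noteq> 0" using nz by auto
      ultimately show "z \<in> nrm (HP p q)" unfolding nrm_def using nrm_unit[OF nz] by force
    qed
  qed
qed

lemma nz_comb:
  fixes x y :: "real^3"
  assumes "norm x = 1" "norm y = 1" "x \<noteq> - y" "a \<ge> 0" "b \<ge> 0" "a + b > 0"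
  shows "a *\<^sub>R x + b *\<^sub>R y \<noteq> 0"
proof
  assume e: "a *\<^sub>R x + b *\<^sub>R y = 0"
  hence "a *\<^sub>R x = - (b *\<^sub>R y)" by (simp add: eq_neg_iff_add_eq_0)
  hence "norm (a *\<^sub>R x) = norm (b *\<^sub>R y)" by (metis norm_minus_cancel)
  hence ab: "a = b" using assms by simp
  hence "a > 0" using assms by simp
  have "a *\<^sub>R (x + y) = 0" using e ab by (simp add: scaleR_add_right)
  hence "x + y = 0" using \<open>a > 0\<close> by simp
  hence "x = - y" by (simp add: eq_neg_iff_add_eq_0)
  thus False using assms(3) by simp
qed

lemma nrm_arc:
  fixes x y :: "real^3"
  assumes "norm x = 1" "norm y = 1" "x \<noteq> - y"
  shows "geodesic_arc (nrm (cone2 x y))"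
  unfolding geodesic_arc_def
proof (intro exI conjI)
  show "norm x = 1" "norm y = 1" "x \<noteq> - y" by fact+
  show "nrm (cone2 x y) = {inverse (norm v) *\<^sub>R v | v. \<exists>t. 0 \<le> t \<and> t \<le> 1 \<and> v = (1 - t) *\<^sub>R x + t *\<^sub>R y}"
  proof
    show "nrm (cone2 x y) \<subseteq> {inverse (norm v) *\<^sub>R v | v. \<exists>t. 0 \<le> t \<and> t \<le> 1 \<and> v = (1 - t) *\<^sub>R x + t *\<^sub>R y}"
    proof
      fix z assume "z \<in> nrm (cone2 x y)"
      then obtain a b where ab: "a \<ge> 0" "b \<ge> 0" "a *\<^sub>R x + b *\<^sub>R y \<noteq> 0"
        "z = inverse (norm (a *\<^sub>R x + b *\<^sub>R y)) *\<^sub>R (a *\<^sub>R x + b *\<^sub>R y)"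
        unfolding nrm_def cone2_def by blast
      have s: "a + b > 0"
      proof (rule ccontr)
        assume "\<not> a + b > 0"
        hence "a = 0" "b = 0" using ab(1,2) by auto
        thus False using ab(3) by simp
      qed
      define t where "t = b / (a + b)"
      have t: "0 \<le> t" "t \<le> 1" unfolding t_def using ab s by auto
      have e1: "(a+b)*(1-t) = a" "(a+b)*t = b" unfolding t_def using s by (simp_all add: field_simps)
      have "(a + b) *\<^sub>R ((1 - t) *\<^sub>R x + t *\<^sub>R y) = ((a+b)*(1-t)) *\<^sub>R x + ((a+b)*t) *\<^sub>R y"
        by (simp add: scaleR_add_right)
      hence "a *\<^sub>R x + b *\<^sub>R y = (a + b) *\<^sub>R ((1 - t) *\<^sub>R x + t *\<^sub>R y)" using e1 by simp
      hence "z = inverse (norm ((1 - t) *\<^sub>R x + t *\<^sub>R y)) *\<^sub>R ((1 - t) *\<^sub>R x + t *\<^sub>R y)"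
        using ab(4) nrm_scale[OF s] by simp
      thus "z \<in> {inverse (norm v) *\<^sub>R v | v. \<exists>t. 0 \<le> t \<and> t \<le> 1 \<and> v = (1 - t) *\<^sub>R x + t *\<^sub>R y}"
        using t by blast
    qed
  next
    show "{inverse (norm v) *\<^sub>R v | v. \<exists>t. 0 \<le> t \<and> t \<le> 1 \<and> v = (1 - t) *\<^sub>R x + t *\<^sub>R y} \<subseteq> nrm (cone2 x y)"
    proof
      fix z assume "z \<in> {inverse (norm v) *\<^sub>R v | v. \<exists>t. 0 \<le> t \<and> t \<le> 1 \<and> v = (1 - t) *\<^sub>R x + t *\<^sub>R y}"
      then obtain t where t: "0 \<le> t" "t \<le> 1"
        "z = inverse (norm ((1 - t) *\<^sub>R x + t *\<^sub>R y)) *\<^sub>R ((1 - t) *\<^sub>R x + t *\<^sub>R y)" by blast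
      have "(1 - t) *\<^sub>R x + t *\<^sub>R y \<noteq> 0" using nz_comb[OF assms, of "1 - t" t] t by simp
      moreover have "(1 - t) *\<^sub>R x + t *\<^sub>R y \<in> cone2 x y" unfolding cone2_def using t by force
      ultimately show "z \<in> nrm (cone2 x y)" unfolding nrm_def t(3) by blast
    qed
  qed
qed

lemma nrm_tri:
  assumes "sph_indep a b c"
  shows "nrm (cone3 a b c) = geo_tri a b c"
proof -
  have ind: "independent {a,b,c}" "a \<noteq> b" "a \<noteq> c" "b \<noteq> c" using assms unfolding sph_indep_def by auto
  have "(\<alpha> *\<^sub>R a + \<beta> *\<^sub>R b + \<gamma> *\<^sub>R c \<noteq> 0) \<longleftrightarrow> \<alpha> + \<beta> + \<gamma> > 0"
    if "\<alpha> \<ge> 0" "\<beta> \<ge> 0" "\<gamma> \<ge> 0" for \<alpha> \<beta> \<gamma>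
  proof
    assume "\<alpha> *\<^sub>R a + \<beta> *\<^sub>R b + \<gamma> *\<^sub>R c \<noteq> 0"
    hence "\<not> (\<alpha> = 0 \<and> \<beta> = 0 \<and> \<gamma> = 0)" by auto
    thus "\<alpha> + \<beta> + \<gamma> > 0" using that by auto
  next
    assume "\<alpha> + \<beta> + \<gamma> > 0"
    hence "\<not> (\<alpha> = 0 \<and> \<beta> = 0 \<and> \<gamma> = 0)" by auto
    thus "\<alpha> *\<^sub>R a + \<beta> *\<^sub>R b + \<gamma> *\<^sub>R c \<noteq> 0" using indep3D[OF ind] by blast
  qed
  thus ?thesis unfolding nrm_def cone3_def geo_tri_def by blast
qed

lemma nrm_hemi:
  assumes "norm h = 1"
  shows "hemisphere (nrm {x. x \<bullet> h \<ge> 0})"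
  unfolding hemisphere_def
proof (intro exI conjI disjI2)
  show "norm h = 1" by fact
  show "nrm {x. x \<bullet> h \<ge> 0} = {q \<in> sphere 0 1. q \<bullet> h \<ge> 0}"
  proof
    show "nrm {x. x \<bullet> h \<ge> 0} \<subseteq> {q \<in> sphere 0 1. q \<bullet> h \<ge> 0}"
      unfolding nrm_def by auto
    show "{q \<in> sphere 0 1. q \<bullet> h \<ge> 0} \<subseteq> nrm {x. x \<bullet> h \<ge> 0}"
    proof
      fix q assume q: "q \<in> {q \<in> sphere 0 1. q \<bullet> h \<ge> 0}"
      hence "norm q = 1" by simp
      thus "q \<in> nrm {x. x \<bullet> h \<ge> 0}" unfolding nrm_def using q nrm_unit by force
    qed
  qed
qed

lemma arc_single: "norm (h::real^3) = 1 \<Longrightarrow> geodesic_arc {h}"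
  unfolding geodesic_arc_def
proof (intro exI conjI)
  assume h: "norm h = 1"
  show "norm h = 1" by fact
  show "h \<noteq> - h"
  proof
    assume "h = - h"
    hence "h + h = h + - h" by simp
    hence "2 *\<^sub>R h = 0" by (simp add: scaleR_2)
    hence "h = 0" by simp
    thus False using h by simp
  qed
  show "{h} = {inverse (norm v) *\<^sub>R v | v. \<exists>t. 0 \<le> t \<and> t \<le> 1 \<and> v = (1 - t) *\<^sub>R h + t *\<^sub>R h}"
  proof -
    have "(1 - t) *\<^sub>R h + t *\<^sub>R h = h" for t :: real by (simp add: scaleR_left_distrib[symmetric])
    note e = this
    show ?thesis
    proof
      have "h = inverse (norm h) *\<^sub>R ((1 - 0) *\<^sub>R h + 0 *\<^sub>R h)" using h by simp
      thus "{h} \<subseteq> {inverse (norm v) *\<^sub>R v | v. \<exists>t. 0 \<le> t \<and> t \<le> 1 \<and> v = (1 - t) *\<^sub>R h + t *\<^sub>R h}"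
        by force
      show "{inverse (norm v) *\<^sub>R v | v. \<exists>t. 0 \<le> t \<and> t \<le> 1 \<and> v = (1 - t) *\<^sub>R h + t *\<^sub>R h} \<subseteq> {h}"
        using e h by auto
    qed
  qed
qed


lemma adm_ns: "adm W S \<Longrightarrow> \<not> subspace (cone_of W) \<Longrightarrow> S = nrm (cone_of W)"
  unfolding adm_def by simp

lemma adm_s: "adm W S \<Longrightarrow> subspace (cone_of W) \<Longrightarrow> \<exists>h. norm h = 1 \<and> (\<forall>c\<in>cone_of W. h \<bullet> c = 0) \<and>
        S = nrm {c + \<tau> *\<^sub>R h | c \<tau>. c \<in> cone_of W \<and> \<tau> \<ge> 0}"
  unfolding adm_def by simp

lemma not_subspace_by: "x \<in> C \<Longrightarrow> - x \<notin> C \<Longrightarrow> \<not> subspace C"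
  using subspace_neg by blast

lemma cc_cone2: "convex_cone (cone2 x y)"
  unfolding convex_cone_iff cone2_def
proof (intro conjI ballI allI impI)
  show "0 \<in> {a *\<^sub>R x + b *\<^sub>R y |a b. 0 \<le> a \<and> 0 \<le> b}" by (rule CollectI, rule exI[of _ 0], rule exI[of _ 0]) simp
next
  fix u v assume "u \<in> {a *\<^sub>R x + b *\<^sub>R y |a b. 0 \<le> a \<and> 0 \<le> b}" "v \<in> {a *\<^sub>R x + b *\<^sub>R y |a b. 0 \<le> a \<and> 0 \<le> b}"
  then obtain a b a' b' where "u = a *\<^sub>R x + b *\<^sub>R y" "v = a' *\<^sub>R x + b' *\<^sub>R y" "a \<ge> 0" "b \<ge> 0" "a' \<ge> 0" "b' \<ge> 0" by blast
  thus "u + v \<in> {a *\<^sub>R x + b *\<^sub>R y |a b. 0 \<le> a \<and> 0 \<le> b}"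
    by (intro CollectI exI[of _ "a + a'"] exI[of _ "b + b'"]) (simp add: algebra_simps)
next
  fix u and c :: real assume "u \<in> {a *\<^sub>R x + b *\<^sub>R y |a b. 0 \<le> a \<and> 0 \<le> b}" "c \<ge> 0"
  then obtain a b where "u = a *\<^sub>R x + b *\<^sub>R y" "a \<ge> 0" "b \<ge> 0" by blast
  thus "c *\<^sub>R u \<in> {a *\<^sub>R x + b *\<^sub>R y |a b. 0 \<le> a \<and> 0 \<le> b}" using \<open>c \<ge> 0\<close>
    by (intro CollectI exI[of _ "c * a"] exI[of _ "c * b"]) (simp add: algebra_simps)
qed

lemma cc_cone3: "convex_cone (cone3 x y z)"
  unfolding convex_cone_iff cone3_def
proof (intro conjI ballI allI impI)
  show "0 \<in> {a *\<^sub>R x + b *\<^sub>R y + c *\<^sub>R z |a b c. 0 \<le> a \<and> 0 \<le> b \<and> 0 \<le> c}"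
    by (rule CollectI, rule exI[of _ 0], rule exI[of _ 0], rule exI[of _ 0]) simp
next
  fix u v assume "u \<in> {a *\<^sub>R x + b *\<^sub>R y + c *\<^sub>R z |a b c. 0 \<le> a \<and> 0 \<le> b \<and> 0 \<le> c}"
    "v \<in> {a *\<^sub>R x + b *\<^sub>R y + c *\<^sub>R z |a b c. 0 \<le> a \<and> 0 \<le> b \<and> 0 \<le> c}"
  then obtain a b c a' b' c' where "u = a *\<^sub>R x + b *\<^sub>R y + c *\<^sub>R z" "v = a' *\<^sub>R x + b' *\<^sub>R y + c' *\<^sub>R z"
    "a \<ge> 0" "b \<ge> 0" "c \<ge> 0" "a' \<ge> 0" "b' \<ge> 0" "c' \<ge> 0" by blast
  thus "u + v \<in> {a *\<^sub>R x + b *\<^sub>R y + c *\<^sub>R z |a b c. 0 \<le> a \<and> 0 \<le> b \<and> 0 \<le> c}"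
    by (intro CollectI exI[of _ "a + a'"] exI[of _ "b + b'"] exI[of _ "c + c'"]) (simp add: algebra_simps)
next
  fix u and d :: real assume "u \<in> {a *\<^sub>R x + b *\<^sub>R y + c *\<^sub>R z |a b c. 0 \<le> a \<and> 0 \<le> b \<and> 0 \<le> c}" "d \<ge> 0"
  then obtain a b c where "u = a *\<^sub>R x + b *\<^sub>R y + c *\<^sub>R z" "a \<ge> 0" "b \<ge> 0" "c \<ge> 0" by blast
  thus "d *\<^sub>R u \<in> {a *\<^sub>R x + b *\<^sub>R y + c *\<^sub>R z |a b c. 0 \<le> a \<and> 0 \<le> b \<and> 0 \<le> c}" using \<open>d \<ge> 0\<close>
    by (intro CollectI exI[of _ "d * a"] exI[of _ "d * b"] exI[of _ "d * c"]) (simp add: algebra_simps)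
qed

lemma cone2_sub: "x \<in> cone_of W \<Longrightarrow> y \<in> cone_of W \<Longrightarrow> cone2 x y \<subseteq> cone_of W"
  unfolding cone2_def by (auto intro!: cone_of_add cone_of_scale)

lemma cone3_sub: "x \<in> cone_of W \<Longrightarrow> y \<in> cone_of W \<Longrightarrow> z \<in> cone_of W \<Longrightarrow> cone3 x y z \<subseteq> cone_of W"
  unfolding cone3_def by (auto intro!: cone_of_add cone_of_scale)

lemma cone2_mem: "a \<ge> 0 \<Longrightarrow> b \<ge> 0 \<Longrightarrow> a *\<^sub>R x + b *\<^sub>R y \<in> cone2 x y"
  unfolding cone2_def by blast
lemma cone2_x: "x \<in> cone2 x y" using cone2_mem[of 1 0 x y] by simp
lemma cone2_y: "y \<in> cone2 x y" using cone2_mem[of 0 1 x y] by simp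
lemma cone3_mem: "a \<ge> 0 \<Longrightarrow> b \<ge> 0 \<Longrightarrow> c \<ge> 0 \<Longrightarrow> a *\<^sub>R x + b *\<^sub>R y + c *\<^sub>R z \<in> cone3 x y z"
  unfolding cone3_def by blast

lemma negx_notin_cone2:
  fixes x y :: "real^3"
  assumes "norm x = 1" "norm y = 1" "x \<noteq> - y"
  shows "- x \<notin> cone2 x y"
proof
  assume "- x \<in> cone2 x y"
  then obtain a b where ab: "a \<ge> 0" "b \<ge> 0" "- x = a *\<^sub>R x + b *\<^sub>R y" unfolding cone2_def by blast
  have "(1 + a) *\<^sub>R x + b *\<^sub>R y = x + (a *\<^sub>R x + b *\<^sub>R y)" by (simp add: algebra_simps)
  also have "\<dots> = 0" using ab(3)[symmetric] by simp
  finally have "(1 + a) *\<^sub>R x + b *\<^sub>R y = 0" .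
  thus False using nz_comb[OF assms, of "1 + a" b] ab by simp
qed

lemma arc_case:
  assumes "finite W" "norm x = 1" "norm y = 1" "x \<noteq> - y" "cone_of W = cone2 x y" "adm W S"
  shows "shapes S"
proof -
  have "\<not> subspace (cone_of W)" using not_subspace_by[of x "cone_of W"] cone2_x negx_notin_cone2[OF assms(2-4)] assms(5) by auto
  hence "S = nrm (cone2 x y)" using adm_ns[OF assms(6)] assms(5) by simp
  thus ?thesis unfolding shapes_def using nrm_arc[OF assms(2-4)] by simp
qed

lemma caseInf:
  assumes "\<not> finite W" "adm W S"
  shows "shapes S"
proof -
  have C: "cone_of W = {0}" using cone_of_inf[OF assms(1)] .
  have "subspace (cone_of W)" unfolding C by (rule subspace_single_0)
  then obtain h where h: "norm h = 1" "S = nrm {c + \<tau> *\<^sub>R h | c \<tau>. c \<in> cone_of W \<and> \<tau> \<ge> 0}"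
    using adm_s[OF assms(2)] by blast
  have "S = {h}"
  proof
    show "S \<subseteq> {h}"
    proof
      fix z assume "z \<in> S"
      then obtain \<tau> where t: "\<tau> \<ge> 0" "\<tau> *\<^sub>R h \<noteq> 0" "z = inverse (norm (\<tau> *\<^sub>R h)) *\<^sub>R (\<tau> *\<^sub>R h)"
        unfolding h(2) C nrm_def by auto
      have "\<tau> > 0" using t(1,2) by (cases "\<tau> = 0") auto
      hence "z = h" using t(3) nrm_scale[of \<tau> h] nrm_unit[OF h(1)] by simp
      thus "z \<in> {h}" by simp
    qed
    have "h = inverse (norm (0 + 1 *\<^sub>R h)) *\<^sub>R (0 + 1 *\<^sub>R h)" using h(1) by simp
    moreover have "0 + 1 *\<^sub>R h \<noteq> 0" using h(1) by auto
    ultimately show "{h} \<subseteq> S" unfolding h(2) C nrm_def by force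
  qed
  thus ?thesis unfolding shapes_def using arc_single[OF h(1)] by simp
qed

lemma hemi_of_plane:
  fixes C :: "(real^3) set"
  assumes "subspace C" "u1 \<in> C" "u2 \<in> C" "norm u1 = 1" "norm u2 = 1" "u1 \<bullet> u2 = 0"
    "norm h = 1" "\<forall>c\<in>C. h \<bullet> c = 0"
  shows "{c + \<tau> *\<^sub>R h | c \<tau>. c \<in> C \<and> \<tau> \<ge> 0} = {x. x \<bullet> h \<ge> 0}"
proof
  have hh: "h \<bullet> h = 1" using assms(7) by (simp add: norm_eq_1)
  show "{c + \<tau> *\<^sub>R h | c \<tau>. c \<in> C \<and> \<tau> \<ge> 0} \<subseteq> {x. x \<bullet> h \<ge> 0}"
  proof
    fix x assume "x \<in> {c + \<tau> *\<^sub>R h | c \<tau>. c \<in> C \<and> \<tau> \<ge> 0}"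
    then obtain c \<tau> where "x = c + \<tau> *\<^sub>R h" "c \<in> C" "\<tau> \<ge> 0" by blast
    moreover have "c \<bullet> h = 0" using assms(8) \<open>c \<in> C\<close> inner_commute by metis
    ultimately show "x \<in> {x. x \<bullet> h \<ge> 0}" using hh by (simp add: inner_add_left)
  qed
  show "{x. x \<bullet> h \<ge> 0} \<subseteq> {c + \<tau> *\<^sub>R h | c \<tau>. c \<in> C \<and> \<tau> \<ge> 0}"
  proof
    fix x assume x: "x \<in> {x. x \<bullet> h \<ge> 0}"
    have "u1 \<bullet> h = 0" "u2 \<bullet> h = 0" using assms(2,3,8) inner_commute by metis+
    hence "x = (x \<bullet> u1) *\<^sub>R u1 + (x \<bullet> u2) *\<^sub>R u2 + (x \<bullet> h) *\<^sub>R h"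
      using onb3[OF assms(4,5,7,6)] by blast
    moreover have "(x \<bullet> u1) *\<^sub>R u1 + (x \<bullet> u2) *\<^sub>R u2 \<in> C"
      using assms(1-3) by (simp add: subspace_add subspace_scale)
    ultimately show "x \<in> {c + \<tau> *\<^sub>R h | c \<tau>. c \<in> C \<and> \<tau> \<ge> 0}" using x by force
  qed
qed


lemma cone_of_eq:
  assumes "finite W" "convex_cone K" "W \<subseteq> K" "K \<subseteq> cone_of W"
  shows "cone_of W = K"
  using cone_of_sub[OF assms(2,1,3)] assms(4) by blast

lemma unit_mult: "norm (x::real^3) = 1 \<Longrightarrow> norm y = 1 \<Longrightarrow> x = s *\<^sub>R y \<Longrightarrow> x = y \<or> x = - y"
proof -
  assume a: "norm x = 1" "norm y = 1" "x = s *\<^sub>R y"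
  hence "\<bar>s\<bar> = 1" by simp
  hence "s = 1 \<or> s = -1" by auto
  thus ?thesis using a(3) by auto
qed

lemma caseB_span:
  fixes a b c :: "real^3"
  assumes W: "W = {a,b,c}" and u: "norm a = 1" "norm b = 1" "norm c = 1"
    and d: "a \<noteq> b" "a \<noteq> c" "b \<noteq> c"
    and na: "\<forall>x\<in>W. \<forall>y\<in>W. x \<noteq> - y"
    and sp: "a \<in> span {b, c}" and ad: "adm W S"
  shows "shapes S"
proof -
  have fW: "finite W" using W by simp
  obtain s t where at: "a = s *\<^sub>R b + t *\<^sub>R c"
    using sp d by (auto simp: span_finite)
  have mem: "a \<in> cone_of W" "b \<in> cone_of W" "c \<in> cone_of W" using cone_of_mem[OF fW] W by auto
  have nab: "a \<noteq> - b" "a \<noteq> - c" "b \<noteq> - c" "b \<noteq> - a" "c \<noteq> - a" "c \<noteq> - b" using na W by auto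
  consider "s \<ge> 0" "t \<ge> 0" | "s > 0" "t < 0" | "s < 0" "t > 0" | "s < 0" "t < 0" | "s < 0" "t = 0" | "s = 0" "t < 0"
    by linarith
  thus ?thesis
  proof cases
    case 1
    have "cone_of W = cone2 b c"
      by (rule cone_of_eq[OF fW cc_cone2]) (use W at 1 cone2_mem cone2_x cone2_y cone2_sub[OF mem(2,3)] in auto)
    thus ?thesis using arc_case[OF fW u(2,3) nab(3) _ ad] by simp
  next
    case 2
    have beq: "b = (1/s) *\<^sub>R a + (- t / s) *\<^sub>R c" using 2 at by (simp add: algebra_simps)
    have "(1/s) *\<^sub>R a + (- t / s) *\<^sub>R c \<in> cone2 a c" by (rule cone2_mem) (use 2 in \<open>simp_all add: divide_le_0_iff\<close>)
    hence "b \<in> cone2 a c" using beq by simp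
    hence "cone_of W = cone2 a c"
      by (intro cone_of_eq[OF fW cc_cone2]) (use W cone2_x cone2_y cone2_sub[OF mem(1,3)] in auto)
    thus ?thesis using arc_case[OF fW u(1,3) nab(2) _ ad] by simp
  next
    case 3
    have ceq: "c = (1/t) *\<^sub>R a + (- s / t) *\<^sub>R b" using 3 at by (simp add: algebra_simps)
    have "(1/t) *\<^sub>R a + (- s / t) *\<^sub>R b \<in> cone2 a b" by (rule cone2_mem) (use 3 in \<open>simp_all add: divide_le_0_iff\<close>)
    hence "c \<in> cone2 a b" using ceq by simp
    hence "cone_of W = cone2 a b"
      by (intro cone_of_eq[OF fW cc_cone2]) (use W cone2_x cone2_y cone2_sub[OF mem(1,2)] in auto)
    thus ?thesis using arc_case[OF fW u(1,2) nab(1) _ ad] by simp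
  next
    case 5
    hence "a = s *\<^sub>R b" using at by simp
    hence "a = b \<or> a = - b" using unit_mult u by blast
    thus ?thesis using d nab by blast
  next
    case 6
    hence "a = t *\<^sub>R c" using at by simp
    hence "a = c \<or> a = - c" using unit_mult u by blast
    thus ?thesis using d nab by blast
  next
    case 4
    let ?C = "cone_of W"
    have "- a = (- s) *\<^sub>R b + (- t) *\<^sub>R c" using at by simp
    hence m1: "- a \<in> ?C" using 4 cone2_mem[of "-s" "-t" b c] cone2_sub[OF mem(2,3)] by auto
    have e2: "- b = (1 / (- s)) *\<^sub>R a + (t / s) *\<^sub>R c" using 4 at by (simp add: algebra_simps)
    have "(1 / (- s)) *\<^sub>R a + (t / s) *\<^sub>R c \<in> cone2 a c"
      by (rule cone2_mem) (use 4 in \<open>simp_all add: divide_le_0_iff zero_le_divide_iff\<close>)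
    hence m2: "- b \<in> ?C" using e2 cone2_sub[OF mem(1,3)] by auto
    have e3: "- c = (1 / (- t)) *\<^sub>R a + (s / t) *\<^sub>R b" using 4 at by (simp add: algebra_simps)
    have "(1 / (- t)) *\<^sub>R a + (s / t) *\<^sub>R b \<in> cone2 a b"
      by (rule cone2_mem) (use 4 in \<open>simp_all add: divide_le_0_iff zero_le_divide_iff\<close>)
    hence m3: "- c \<in> ?C" using e3 cone2_sub[OF mem(1,2)] by auto
    have K: "convex_cone {x. - x \<in> ?C}"
      unfolding convex_cone_iff
    proof (intro conjI ballI allI impI)
      show "0 \<in> {x. - x \<in> ?C}" using cone_of_0 by simp
    next
      fix x y assume "x \<in> {x. - x \<in> ?C}" "y \<in> {x. - x \<in> ?C}"
      hence "- x + - y \<in> ?C" using cone_of_add by blast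
      thus "x + y \<in> {x. - x \<in> ?C}" by (simp add: add.commute)
    next
      fix x and r :: real assume "x \<in> {x. - x \<in> ?C}" "r \<ge> 0"
      hence "r *\<^sub>R (- x) \<in> ?C" using cone_of_scale by blast
      thus "r *\<^sub>R x \<in> {x. - x \<in> ?C}" by simp
    qed
    have "?C \<subseteq> {x. - x \<in> ?C}" using cone_of_sub[OF K fW] W m1 m2 m3 by auto
    hence "subspace ?C" unfolding subspace_convex_cone_symmetric using cone_of_cc by blast
    then obtain h where h: "norm h = 1" "\<forall>c\<in>?C. h \<bullet> c = 0" "S = nrm {c + \<tau> *\<^sub>R h | c \<tau>. c \<in> ?C \<and> \<tau> \<ge> 0}"
      using adm_s[OF ad] by blast
    define g0 where "g0 = c - (c \<bullet> b) *\<^sub>R b"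
    have bb: "b \<bullet> b = 1" using u by (simp add: norm_eq_1)
    have "g0 \<noteq> 0"
    proof
      assume "g0 = 0"
      hence "c = (c \<bullet> b) *\<^sub>R b" unfolding g0_def by simp
      hence "c = b \<or> c = - b" using unit_mult u by blast
      thus False using d nab by blast
    qed
    define g where "g = inverse (norm g0) *\<^sub>R g0"
    have g1: "norm g = 1" unfolding g_def using \<open>g0 \<noteq> 0\<close> by simp
    have "b \<bullet> g0 = 0" unfolding g0_def using bb by (simp add: inner_diff_right inner_commute)
    hence bg: "b \<bullet> g = 0" unfolding g_def by simp
    have gC: "g \<in> ?C" unfolding g_def g0_def
      using \<open>subspace ?C\<close> mem by (intro subspace_scale subspace_diff) auto
    have "S = nrm {x. x \<bullet> h \<ge> 0}"
      using h(3) hemi_of_plane[OF \<open>subspace ?C\<close> mem(2) gC u(2) g1 bg h(1,2)] by simp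
    thus ?thesis unfolding shapes_def using nrm_hemi[OF h(1)] by simp
  qed
qed

lemma caseB:
  fixes a b c :: "real^3"
  assumes W: "W = {a,b,c}" and Ws: "W \<subseteq> sphere 0 1"
    and na: "\<forall>x\<in>W. \<forall>y\<in>W. x \<noteq> - y"
    and ad: "adm W S"
  shows "shapes S"
proof -
  have fW: "finite W" using W by simp
  have u: "norm a = 1" "norm b = 1" "norm c = 1" using Ws W by auto
  have mem: "a \<in> cone_of W" "b \<in> cone_of W" "c \<in> cone_of W" using cone_of_mem[OF fW] W by auto
  have nab: "a \<noteq> - b" "a \<noteq> - c" "b \<noteq> - c" using na W by auto
  show ?thesis
  proof (cases "a = b \<or> a = c \<or> b = c")
    case True
    then consider "a = b" | "a = c" | "b = c" by blast
    thus ?thesis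
    proof cases
      case 1
      hence "cone_of W = cone2 b c"
        by (intro cone_of_eq[OF fW cc_cone2]) (use W cone2_x cone2_y cone2_sub[OF mem(2,3)] in auto)
      thus ?thesis using arc_case[OF fW u(2,3) nab(3) _ ad] by simp
    next
      case 2
      hence "cone_of W = cone2 a b"
        by (intro cone_of_eq[OF fW cc_cone2]) (use W cone2_x cone2_y cone2_sub[OF mem(1,2)] in auto)
      thus ?thesis using arc_case[OF fW u(1,2) nab(1) _ ad] by simp
    next
      case 3
      hence "cone_of W = cone2 a b"
        by (intro cone_of_eq[OF fW cc_cone2]) (use W cone2_x cone2_y cone2_sub[OF mem(1,2)] in auto)
      thus ?thesis using arc_case[OF fW u(1,2) nab(1) _ ad] by simp
    qed
  next
    case False
    hence d: "a \<noteq> b" "a \<noteq> c" "b \<noteq> c" by auto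
    show ?thesis
    proof (cases "independent {a,b,c}")
      case True
      have si: "sph_indep a b c" unfolding sph_indep_def using u d True by simp
      have C: "cone_of W = cone3 a b c"
        by (intro cone_of_eq[OF fW cc_cone3])
           (use W cone3_sub[OF mem] cone3_mem[of 1 0 0 a b c] cone3_mem[of 0 1 0 a b c] cone3_mem[of 0 0 1 a b c] in auto)
      have "- a \<notin> cone3 a b c"
      proof
        assume "- a \<in> cone3 a b c"
        then obtain \<alpha> \<beta> \<gamma> where e: "\<alpha> \<ge> 0" "- a = \<alpha> *\<^sub>R a + \<beta> *\<^sub>R b + \<gamma> *\<^sub>R c"
          unfolding cone3_def by blast
        have "(1 + \<alpha>) *\<^sub>R a + \<beta> *\<^sub>R b + \<gamma> *\<^sub>R c = a + (\<alpha> *\<^sub>R a + \<beta> *\<^sub>R b + \<gamma> *\<^sub>R c)"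
          by (simp add: algebra_simps)
        also have "\<dots> = 0" using e(2)[symmetric] by simp
        finally have "1 + \<alpha> = 0" using indep3D[OF True d] by blast
        thus False using e(1) by simp
      qed
      hence "\<not> subspace (cone_of W)" using not_subspace_by[of a] C cone3_mem[of 1 0 0 a b c] by auto
      hence "S = nrm (cone3 a b c)" using adm_ns[OF ad] C by simp
      thus ?thesis unfolding shapes_def geodesic_triangle_def using nrm_tri[OF si] si by blast
    next
      case False
      then obtain v where v: "v \<in> {a,b,c}" "v \<in> span ({a,b,c} - {v})" unfolding dependent_def by blast
      consider "v = a" | "v = b" | "v = c" using v(1) by blast
      thus ?thesis
      proof cases
        case 1
        hence "a \<in> span {b,c}" using v d by (metis insert_Diff_single insert_absorb2 insert_commute Diff_insert_absorb singletonD insertE)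
        thus ?thesis using caseB_span[OF W u d na _ ad] by blast
      next
        case 2
        have W': "W = {b,a,c}" using W by auto
        have "{a,b,c} - {b} = {a,c}" using d by auto
        hence "b \<in> span {a,c}" using v 2 by simp
        moreover have "b \<noteq> a" "b \<noteq> c" "a \<noteq> c" using d by auto
        ultimately show ?thesis using caseB_span[OF W' u(2,1,3) _ _ _ _ _ ad] na W' by blast
      next
        case 3
        have W': "W = {c,a,b}" using W by auto
        have "{a,b,c} - {c} = {a,b}" using d by auto
        hence "c \<in> span {a,b}" using v 3 by simp
        moreover have "c \<noteq> a" "c \<noteq> b" "a \<noteq> b" using d by auto
        ultimately show ?thesis using caseB_span[OF W' u(3,1,2) _ _ _ _ _ ad] na W' by blast
      qed
    qed
  qed
qed


lemma sq_mono_nn: "0 \<le> (a::real) \<Longrightarrow> a \<le> b \<Longrightarrow> a * a \<le> b * b"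
  by (simp add: mult_mono)

lemma sq_le_imp_le_nn: "0 \<le> (b::real) \<Longrightarrow> a * a \<le> b * b \<Longrightarrow> 0 \<le> a \<Longrightarrow> a \<le> b"
  by (metis mult_mono not_le less_le_not_le mult_strict_mono' linorder_not_le)

lemma K0:
  fixes c1 s1 c2 s2 :: real
  assumes "c2 \<le> c1" "s1 \<ge> 0" "s2 \<ge> 0" "c1 * c1 + s1 * s1 = 1" "c2 * c2 + s2 * s2 = 1"
  shows "s1 * c2 \<le> c1 * s2"
proof -
  consider "c2 \<le> 0" "0 \<le> c1" | "0 \<le> c2" | "c1 \<le> 0" by linarith
  thus ?thesis
  proof cases
    case 1
    have "s1 * c2 \<le> 0" using 1 assms by (simp add: mult_nonneg_nonpos)
    moreover have "0 \<le> c1 * s2" using 1 assms by simp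
    ultimately show ?thesis by linarith
  next
    case 2
    have "c2 * c2 \<le> c1 * c1" using 2 assms(1) by (rule sq_mono_nn)
    hence "s1 * s1 \<le> s2 * s2" using assms by linarith
    hence "s1 \<le> s2" using sq_le_imp_le_nn assms by blast
    have "s1 * c2 \<le> s2 * c2" using \<open>s1 \<le> s2\<close> 2 by (rule mult_right_mono)
    also have "\<dots> \<le> s2 * c1" using assms(1,3) by (rule mult_left_mono)
    finally have "s1 * c2 \<le> s2 * c1" .
    thus ?thesis by (simp only: mult.commute[of s2 c1])
  next
    case 3
    have "(-c1) * (-c1) \<le> (-c2) * (-c2)" using 3 assms(1) by (intro sq_mono_nn) auto
    hence "s2 * s2 \<le> s1 * s1" using assms by simp
    hence "s2 \<le> s1" using sq_le_imp_le_nn assms by blast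
    have "s2 * (-c1) \<le> s2 * (-c2)" using assms(1,3) by (intro mult_left_mono) auto
    also have "\<dots> \<le> s1 * (-c2)" using \<open>s2 \<le> s1\<close> 3 assms(1) by (intro mult_right_mono) auto
    finally have "s2 * (-c1) \<le> s1 * (-c2)" .
    hence "s1 * c2 \<le> s2 * c1" by simp
    thus ?thesis by (simp only: mult.commute[of s2 c1])
  qed
qed

lemma cs_of:
  fixes x y :: real
  assumes "x*x + y*y > 0"
  defines "\<rho> \<equiv> sqrt (x*x + y*y)"
  shows "\<rho> > 0" "(x/\<rho>) * (x/\<rho>) + (y/\<rho>) * (y/\<rho>) = 1" "x = \<rho> * (x/\<rho>)" "y = \<rho> * (y/\<rho>)"
proof -
  show rp: "\<rho> > 0" unfolding \<rho>_def using assms by simp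
  have "\<rho> * \<rho> = x*x + y*y" unfolding \<rho>_def using assms by simp
  moreover have "(x/\<rho>) * (x/\<rho>) + (y/\<rho>) * (y/\<rho>) = (x*x + y*y) / (\<rho> * \<rho>)"
    by (simp add: add_divide_distrib)
  ultimately have "(x/\<rho>) * (x/\<rho>) + (y/\<rho>) * (y/\<rho>) = (\<rho> * \<rho>) / (\<rho> * \<rho>)" by simp
  thus "(x/\<rho>) * (x/\<rho>) + (y/\<rho>) * (y/\<rho>) = 1" using rp by simp
  show "x = \<rho> * (x/\<rho>)" "y = \<rho> * (y/\<rho>)" using rp by simp_all
qed

lemma K1:
  fixes x1 y1 x2 y2 :: real
  assumes "y1 \<ge> 0" "y2 \<ge> 0" "x1*x1 + y1*y1 > 0" "x2*x2 + y2*y2 > 0"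
    "x2 / sqrt (x2*x2 + y2*y2) \<le> x1 / sqrt (x1*x1 + y1*y1)"
  shows "x1 * y2 - y1 * x2 \<ge> 0"
proof -
  define r1 where "r1 = sqrt (x1*x1 + y1*y1)"
  define r2 where "r2 = sqrt (x2*x2 + y2*y2)"
  note a1 = cs_of[OF assms(3), folded r1_def]
  note a2 = cs_of[OF assms(4), folded r2_def]
  have "(y1/r1) * (x2/r2) \<le> (x1/r1) * (y2/r2)"
    by (rule K0) (use assms a1 a2 r1_def r2_def in auto)
  hence "r1 * r2 * ((y1/r1) * (x2/r2)) \<le> r1 * r2 * ((x1/r1) * (y2/r2))"
    using a1(1) a2(1) by (intro mult_left_mono) auto
  hence "y1 * x2 \<le> x1 * y2" using a1(1) a2(1) by (simp add: field_simps)
  thus ?thesis by simp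
qed

lemma K2:
  fixes x1 y1 x2 y2 :: real
  assumes "y1 \<ge> 0" "y2 \<ge> 0" "x1*x1 + y1*y1 > 0" "x2*x2 + y2*y2 > 0"
    "x2 / sqrt (x2*x2 + y2*y2) = x1 / sqrt (x1*x1 + y1*y1)"
  shows "y2 / sqrt (x2*x2 + y2*y2) = y1 / sqrt (x1*x1 + y1*y1)"
proof -
  define r1 where "r1 = sqrt (x1*x1 + y1*y1)"
  define r2 where "r2 = sqrt (x2*x2 + y2*y2)"
  note a1 = cs_of[OF assms(3), folded r1_def]
  note a2 = cs_of[OF assms(4), folded r2_def]
  have "(x2/r2) * (x2/r2) = (x1/r1) * (x1/r1)" using assms(5)[folded r1_def r2_def] by simp
  hence "(y2/r2) * (y2/r2) = (y1/r1) * (y1/r1)" using a1(2) a2(2) by linarith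
  moreover have "y2/r2 \<ge> 0" "y1/r1 \<ge> 0" using a1(1) a2(1) assms(1,2) by simp_all
  ultimately have "y2/r2 = y1/r1" using sq_le_imp_le_nn by (metis order.antisym order_refl)
  thus ?thesis unfolding r1_def r2_def .
qed

lemma K3:
  fixes x1 y1 x2 y2 :: real
  assumes "y1 \<ge> 0" "y2 \<ge> 0" "x1*x1 + y1*y1 > 0" "x2*x2 + y2*y2 > 0"
    "x2 / sqrt (x2*x2 + y2*y2) < x1 / sqrt (x1*x1 + y1*y1)"
    "x1 * y2 - y1 * x2 = 0"
  shows "y1 = 0 \<and> y2 = 0 \<and> x1 > 0 \<and> x2 < 0"
proof -
  define r1 where "r1 = sqrt (x1*x1 + y1*y1)"
  define r2 where "r2 = sqrt (x2*x2 + y2*y2)"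
  note a1 = cs_of[OF assms(3), folded r1_def]
  note a2 = cs_of[OF assms(4), folded r2_def]
  define c1 where "c1 = x1/r1"
  define s1 where "s1 = y1/r1"
  define c2 where "c2 = x2/r2"
  define s2 where "s2 = y2/r2"
  have cs1: "c1*c1 + s1* s1 = 1" "c2*c2 + s2* s2 = 1" using a1(2) a2(2) c1_def s1_def c2_def s2_def by auto
  have lt: "c2 < c1" using assms(5) c1_def c2_def r1_def r2_def by simp
  have s0: "s1 \<ge> 0" "s2 \<ge> 0" using a1(1) a2(1) assms(1,2) s1_def s2_def by simp_all
  have "r1 * r2 * (c1 * s2 - s1 * c2) = x1 * y2 - y1 * x2"
    using a1(1) a2(1) unfolding c1_def s1_def c2_def s2_def by (simp add: field_simps)
  hence e: "c1 * s2 = s1 * c2" using assms(6) a1(1) a2(1) by simp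
  hence "(c1 * s2) * (c1 * s2) = (s1 * c2) * (s1 * c2)" by simp
  hence "(c1*c1) * (s2* s2) = (s1* s1) * (c2*c2)" by (simp add: algebra_simps)
  hence "(1 - s1* s1) * (s2* s2) = (s1* s1) * (1 - s2* s2)" using cs1 by (metis add_diff_cancel_right')
  hence "s2* s2 = s1* s1" by (simp add: algebra_simps)
  hence ss: "s2 = s1" using s0 sq_le_imp_le_nn by (metis order.antisym order_refl)
  have "s1 = 0"
  proof (rule ccontr)
    assume "s1 \<noteq> 0"
    hence "c1 = c2" using e ss by (simp add: mult.commute)
    thus False using lt by simp
  qed
  hence s12: "s1 = 0" "s2 = 0" using ss by auto
  have "c1 * c1 = 1" "c2 * c2 = 1" using cs1 s12 by auto
  hence "c1 = 1 \<or> c1 = -1" "c2 = 1 \<or> c2 = -1" by (auto simp: square_eq_1_iff)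
  hence "c1 = 1" "c2 = -1" using lt by auto
  hence "x1 > 0" "x2 < 0" using a1 a2 c1_def c2_def by (metis mult.right_neutral, metis mult_minus1_right neg_less_0_iff_less)
  moreover have "y1 = 0" "y2 = 0" using s12 s1_def s2_def a1(1) a2(1) by auto
  ultimately show ?thesis by simp
qed


definition kk :: "real \<Rightarrow> real \<Rightarrow> real" where "kk x y = x / sqrt (x*x + y*y)"

definition K4 :: "real^3 \<Rightarrow> real^3 \<Rightarrow> real^3 \<Rightarrow> (real^3) set" where
  "K4 p q r = {a *\<^sub>R p + b *\<^sub>R q + c *\<^sub>R r | a b c. b \<ge> 0 \<and> c \<ge> 0}"
definition PL :: "real^3 \<Rightarrow> real^3 \<Rightarrow> (real^3) set" where
  "PL p f = {a *\<^sub>R p + b *\<^sub>R f | a b. True}"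
definition LN :: "real^3 \<Rightarrow> (real^3) set" where
  "LN p = {a *\<^sub>R p | a. True}"

lemma cc_HP: "convex_cone (HP x y)"
  unfolding convex_cone_iff HP_def
proof (intro conjI ballI allI impI)
  show "0 \<in> {a *\<^sub>R x + b *\<^sub>R y |a b. 0 \<le> b}" by (rule CollectI, rule exI[of _ 0], rule exI[of _ 0]) simp
next
  fix u v assume "u \<in> {a *\<^sub>R x + b *\<^sub>R y |a b. 0 \<le> b}" "v \<in> {a *\<^sub>R x + b *\<^sub>R y |a b. 0 \<le> b}"
  then obtain a b a' b' where "u = a *\<^sub>R x + b *\<^sub>R y" "v = a' *\<^sub>R x + b' *\<^sub>R y" "b \<ge> 0" "b' \<ge> 0" by blast
  thus "u + v \<in> {a *\<^sub>R x + b *\<^sub>R y |a b. 0 \<le> b}"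
    by (intro CollectI exI[of _ "a + a'"] exI[of _ "b + b'"]) (simp add: algebra_simps)
next
  fix u and c :: real assume "u \<in> {a *\<^sub>R x + b *\<^sub>R y |a b. 0 \<le> b}" "c \<ge> 0"
  then obtain a b where "u = a *\<^sub>R x + b *\<^sub>R y" "b \<ge> 0" by blast
  thus "c *\<^sub>R u \<in> {a *\<^sub>R x + b *\<^sub>R y |a b. 0 \<le> b}" using \<open>c \<ge> 0\<close>
    by (intro CollectI exI[of _ "c * a"] exI[of _ "c * b"]) (simp add: algebra_simps)
qed

lemma cc_PL: "convex_cone (PL x y)"
  unfolding convex_cone_iff PL_def
proof (intro conjI ballI allI impI)
  show "0 \<in> {a *\<^sub>R x + b *\<^sub>R y |a b. True}" by (rule CollectI, rule exI[of _ 0], rule exI[of _ 0]) simp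
next
  fix u v assume "u \<in> {a *\<^sub>R x + b *\<^sub>R y |a b. True}" "v \<in> {a *\<^sub>R x + b *\<^sub>R y |a b. True}"
  then obtain a b a' b' where "u = a *\<^sub>R x + b *\<^sub>R y" "v = a' *\<^sub>R x + b' *\<^sub>R y" by blast
  thus "u + v \<in> {a *\<^sub>R x + b *\<^sub>R y |a b. True}"
    by (intro CollectI exI[of _ "a + a'"] exI[of _ "b + b'"]) (simp add: algebra_simps)
next
  fix u and c :: real assume "u \<in> {a *\<^sub>R x + b *\<^sub>R y |a b. True}" "c \<ge> 0"
  then obtain a b where "u = a *\<^sub>R x + b *\<^sub>R y" by blast
  thus "c *\<^sub>R u \<in> {a *\<^sub>R x + b *\<^sub>R y |a b. True}"
    by (intro CollectI exI[of _ "c * a"] exI[of _ "c * b"]) (simp add: algebra_simps)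
qed

lemma cc_LN: "convex_cone (LN x)"
  unfolding convex_cone_iff LN_def
proof (intro conjI ballI allI impI)
  show "0 \<in> {a *\<^sub>R x |a. True}" by (rule CollectI, rule exI[of _ 0]) simp
next
  fix u v assume "u \<in> {a *\<^sub>R x |a. True}" "v \<in> {a *\<^sub>R x |a. True}"
  then obtain a a' where "u = a *\<^sub>R x" "v = a' *\<^sub>R x" by blast
  thus "u + v \<in> {a *\<^sub>R x |a. True}"
    by (intro CollectI exI[of _ "a + a'"]) (simp add: algebra_simps)
next
  fix u and c :: real assume "u \<in> {a *\<^sub>R x |a. True}" "c \<ge> 0"
  then obtain a where "u = a *\<^sub>R x" by blast
  thus "c *\<^sub>R u \<in> {a *\<^sub>R x |a. True}"
    by (intro CollectI exI[of _ "c * a"]) (simp add: algebra_simps)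
qed

lemma cc_K4: "convex_cone (K4 x y z)"
  unfolding convex_cone_iff K4_def
proof (intro conjI ballI allI impI)
  show "0 \<in> {a *\<^sub>R x + b *\<^sub>R y + c *\<^sub>R z |a b c. 0 \<le> b \<and> 0 \<le> c}"
    by (rule CollectI, rule exI[of _ 0], rule exI[of _ 0], rule exI[of _ 0]) simp
next
  fix u v assume "u \<in> {a *\<^sub>R x + b *\<^sub>R y + c *\<^sub>R z |a b c. 0 \<le> b \<and> 0 \<le> c}"
    "v \<in> {a *\<^sub>R x + b *\<^sub>R y + c *\<^sub>R z |a b c. 0 \<le> b \<and> 0 \<le> c}"
  then obtain a b c a' b' c' where "u = a *\<^sub>R x + b *\<^sub>R y + c *\<^sub>R z" "v = a' *\<^sub>R x + b' *\<^sub>R y + c' *\<^sub>R z"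
    "b \<ge> 0" "c \<ge> 0" "b' \<ge> 0" "c' \<ge> 0" by blast
  thus "u + v \<in> {a *\<^sub>R x + b *\<^sub>R y + c *\<^sub>R z |a b c. 0 \<le> b \<and> 0 \<le> c}"
    by (intro CollectI exI[of _ "a + a'"] exI[of _ "b + b'"] exI[of _ "c + c'"]) (simp add: algebra_simps)
next
  fix u and d :: real assume "u \<in> {a *\<^sub>R x + b *\<^sub>R y + c *\<^sub>R z |a b c. 0 \<le> b \<and> 0 \<le> c}" "d \<ge> 0"
  then obtain a b c where "u = a *\<^sub>R x + b *\<^sub>R y + c *\<^sub>R z" "b \<ge> 0" "c \<ge> 0" by blast
  thus "d *\<^sub>R u \<in> {a *\<^sub>R x + b *\<^sub>R y + c *\<^sub>R z |a b c. 0 \<le> b \<and> 0 \<le> c}" using \<open>d \<ge> 0\<close>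
    by (intro CollectI exI[of _ "d * a"] exI[of _ "d * b"] exI[of _ "d * c"]) (simp add: algebra_simps)
qed

lemma cc_half: "convex_cone {x::real^3. x \<bullet> n \<ge> 0}"
  unfolding convex_cone_iff by (auto simp: inner_add_left)

lemma line_in: "p \<in> cone_of W \<Longrightarrow> - p \<in> cone_of W \<Longrightarrow> a *\<^sub>R p \<in> cone_of W"
proof -
  assume a: "p \<in> cone_of W" "- p \<in> cone_of W"
  show ?thesis
  proof (cases "a \<ge> 0")
    case True thus ?thesis using cone_of_scale a by blast
  next
    case False
    hence "(- a) \<ge> 0" by simp
    hence "(- a) *\<^sub>R (- p) \<in> cone_of W" using cone_of_scale a(2) by blast
    thus ?thesis by simp
  qed
qed

lemma get_normal:
  assumes "finite W" "adm W S"
  shows "\<exists>n. norm n = 1 \<and> (\<forall>c\<in>cone_of W. n \<bullet> c \<ge> 0)"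
proof (cases "subspace (cone_of W)")
  case True
  then obtain h where "norm h = 1" "\<forall>c\<in>cone_of W. h \<bullet> c = 0" using adm_s[OF assms(2)] by blast
  thus ?thesis by (intro exI[of _ h]) auto
next
  case False
  then obtain x where x: "x \<in> cone_of W" "- x \<notin> cone_of W"
    using subspace_convex_cone_symmetric cone_of_cc by blast
  have cv: "convex (cone_of W)" using cone_of_cc by (simp add: convex_cone_def)
  obtain a b where ab: "a \<bullet> (- x) < b" "\<forall>y\<in>cone_of W. b < a \<bullet> y"
    using separating_hyperplane_closed_point[OF cv cone_of_closed[OF assms(1)] x(2)] by blast
  have b0: "b < 0" using ab(2) cone_of_0 by force
  have nn: "a \<bullet> y \<ge> 0" if "y \<in> cone_of W" for y
  proof (rule ccontr)
    assume "\<not> a \<bullet> y \<ge> 0"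
    hence ay: "a \<bullet> y < 0" by simp
    define t where "t = b / (a \<bullet> y)"
    have t0: "t \<ge> 0" unfolding t_def using ay b0 by (simp add: divide_nonpos_neg less_imp_le)
    have "t *\<^sub>R y \<in> cone_of W" using cone_of_scale[OF that t0] .
    hence "b < a \<bullet> (t *\<^sub>R y)" using ab(2) by blast
    moreover have "a \<bullet> (t *\<^sub>R y) = b" unfolding t_def using ay by simp
    ultimately show False by simp
  qed
  have "a \<noteq> 0" using ab(1) b0 by auto
  hence "norm (inverse (norm a) *\<^sub>R a) = 1" by simp
  moreover have "\<forall>c\<in>cone_of W. (inverse (norm a) *\<^sub>R a) \<bullet> c \<ge> 0" using nn by simp
  ultimately show ?thesis by blast
qed

lemma comb_id:
  fixes p f n q r :: "real^3"
  assumes "q = a1 *\<^sub>R p + b1 *\<^sub>R f + c1 *\<^sub>R n" "r = a2 *\<^sub>R p + b2 *\<^sub>R f + c2 *\<^sub>R n"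
    "\<alpha> + \<beta> * a1 + \<gamma> * a2 = a0" "\<beta> * b1 + \<gamma> * b2 = b0" "\<beta> * c1 + \<gamma> * c2 = c0"
  shows "\<alpha> *\<^sub>R p + \<beta> *\<^sub>R q + \<gamma> *\<^sub>R r = a0 *\<^sub>R p + b0 *\<^sub>R f + c0 *\<^sub>R n"
proof -
  have "\<alpha> *\<^sub>R p + \<beta> *\<^sub>R q + \<gamma> *\<^sub>R r = (\<alpha> + \<beta> * a1 + \<gamma> * a2) *\<^sub>R p + (\<beta> * b1 + \<gamma> * b2) *\<^sub>R f + (\<beta> * c1 + \<gamma> * c2) *\<^sub>R n"
    unfolding assms(1,2) by (simp add: algebra_simps)
  thus ?thesis using assms(3-5) by simp
qed


locale actx =
  fixes W S :: "(real^3) set" and p f n :: "real^3"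
  assumes fW: "finite W" and Ws: "W \<subseteq> sphere 0 1" and pW: "p \<in> W" and mpW: "- p \<in> W"
    and ad: "adm W S" and np: "norm p = 1" and nf: "norm f = 1" and nn: "norm n = 1"
    and pf: "p \<bullet> f = 0" and pn: "p \<bullet> n = 0" and fn: "f \<bullet> n = 0"
    and pos: "\<forall>c\<in>cone_of W. n \<bullet> c \<ge> 0"
begin

lemma ip: "p \<bullet> p = 1" "f \<bullet> f = 1" "n \<bullet> n = 1" "f \<bullet> p = 0" "n \<bullet> p = 0" "n \<bullet> f = 0"
  using np nf nn pf pn fn by (simp_all add: norm_eq_1 inner_commute)

lemma dec: "x = (x \<bullet> p) *\<^sub>R p + (x \<bullet> f) *\<^sub>R f + (x \<bullet> n) *\<^sub>R n"
  using onb3[OF np nf nn pf pn fn] .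

lemma coords: "(a *\<^sub>R p + b *\<^sub>R f + c *\<^sub>R n) \<bullet> p = a" "(a *\<^sub>R p + b *\<^sub>R f + c *\<^sub>R n) \<bullet> f = b"
  "(a *\<^sub>R p + b *\<^sub>R f + c *\<^sub>R n) \<bullet> n = c"
  using ip pf pn fn by (simp_all add: inner_add_left)

lemma Cp: "p \<in> cone_of W" "- p \<in> cone_of W" using cone_of_mem[OF fW] pW mpW by auto

lemma lin: "a *\<^sub>R p \<in> cone_of W" using line_in[OF Cp] .

lemma memW: "w \<in> W \<Longrightarrow> w \<in> cone_of W" using cone_of_mem[OF fW] .

lemma Yge: "w \<in> W \<Longrightarrow> w \<bullet> n \<ge> 0" using pos memW by (metis inner_commute)

lemma posC: "c \<in> cone_of W \<Longrightarrow> c \<bullet> n \<ge> 0" using pos by (metis inner_commute)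

lemma dir_in: "v \<in> cone_of W \<Longrightarrow> v = e + b *\<^sub>R u \<Longrightarrow> - e \<in> cone_of W \<Longrightarrow> b > 0 \<Longrightarrow> u \<in> cone_of W"
proof -
  assume a: "v \<in> cone_of W" "v = e + b *\<^sub>R u" "- e \<in> cone_of W" "b > 0"
  have "v + - e \<in> cone_of W" using cone_of_add a by blast
  hence "(1/b) *\<^sub>R (v + - e) \<in> cone_of W" using cone_of_scale a(4) by simp
  moreover have "(1/b) *\<^sub>R (v + - e) = u" using a(2,4) by simp
  ultimately show ?thesis by simp
qed

lemma notsub_by: "w \<in> W \<Longrightarrow> w \<bullet> n > 0 \<Longrightarrow> \<not> subspace (cone_of W)"
proof
  assume a: "w \<in> W" "w \<bullet> n > 0" "subspace (cone_of W)"
  hence "- w \<in> cone_of W" using memW subspace_neg by blast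
  hence "(- w) \<bullet> n \<ge> 0" by (rule posC)
  thus False using a(2) by simp
qed

definition "W' = {w\<in>W. (w \<bullet> f)*(w \<bullet> f) + (w \<bullet> n)*(w \<bullet> n) > 0}"

lemma notW': "w \<in> W \<Longrightarrow> w \<notin> W' \<Longrightarrow> w \<bullet> f = 0 \<and> w \<bullet> n = 0"
proof -
  assume a: "w \<in> W" "w \<notin> W'"
  hence "(w \<bullet> f)*(w \<bullet> f) + (w \<bullet> n)*(w \<bullet> n) \<le> 0" unfolding W'_def by auto
  moreover have "(w \<bullet> f)*(w \<bullet> f) \<ge> 0" "(w \<bullet> n)*(w \<bullet> n) \<ge> 0" by simp_all
  ultimately have "(w \<bullet> f)*(w \<bullet> f) = 0" "(w \<bullet> n)*(w \<bullet> n) = 0" by linarith+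
  thus ?thesis by simp
qed

lemma case_line:
  assumes "W' = {}"
  shows "shapes S"
proof -
  have WL: "W \<subseteq> LN p"
  proof
    fix w assume "w \<in> W"
    hence "w \<bullet> f = 0 \<and> w \<bullet> n = 0" using notW' assms by blast
    hence "w = (w \<bullet> p) *\<^sub>R p" using dec[of w] by simp
    thus "w \<in> LN p" unfolding LN_def by blast
  qed
  have C: "cone_of W = LN p"
    by (rule cone_of_eq[OF fW cc_LN WL]) (auto simp: LN_def lin)
  have "subspace (LN p)" unfolding subspace_convex_cone_symmetric
  proof (intro conjI cc_LN ballI)
    fix x assume "x \<in> LN p"
    then obtain a where "x = a *\<^sub>R p" unfolding LN_def by blast
    hence "- x = (- a) *\<^sub>R p" by simp
    thus "- x \<in> LN p" unfolding LN_def by blast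
  qed
  then obtain h where h: "norm h = 1" "\<forall>c\<in>cone_of W. h \<bullet> c = 0"
      "S = nrm {c + \<tau> *\<^sub>R h | c \<tau>. c \<in> cone_of W \<and> \<tau> \<ge> 0}"
    using adm_s[OF ad] C by auto
  have "p \<bullet> h = 0" using h(2) Cp(1) by (metis inner_commute)
  have "{c + \<tau> *\<^sub>R h | c \<tau>. c \<in> cone_of W \<and> \<tau> \<ge> 0} = HP p h"
    unfolding C LN_def HP_def by blast
  hence "S = nrm (HP p h)" using h(3) by simp
  thus ?thesis unfolding shapes_def using nrm_semi[OF np h(1) \<open>p \<bullet> h = 0\<close>] by simp
qed

lemma case_dir:
  assumes q: "q \<in> W'" and all: "\<forall>w\<in>W'. kk (w \<bullet> f) (w \<bullet> n) = kk (q \<bullet> f) (q \<bullet> n)"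
  shows "shapes S"
proof -
  have qW: "q \<in> W" and q0: "(q \<bullet> f)*(q \<bullet> f) + (q \<bullet> n)*(q \<bullet> n) > 0" using q unfolding W'_def by auto
  define \<rho> where "\<rho> = sqrt ((q \<bullet> f)*(q \<bullet> f) + (q \<bullet> n)*(q \<bullet> n))"
  note cq = cs_of[OF q0, folded \<rho>_def]
  define c0 where "c0 = (q \<bullet> f) / \<rho>"
  define s0 where "s0 = (q \<bullet> n) / \<rho>"
  define d where "d = c0 *\<^sub>R f + s0 *\<^sub>R n"
  have "d \<bullet> d = c0 * c0 + s0 * s0" unfolding d_def inner2 using ip fn by simp
  hence dd: "d \<bullet> d = 1" using cq(2) c0_def s0_def by simp
  hence nd: "norm d = 1" by (simp add: norm_eq_1)
  have pd: "p \<bullet> d = 0" unfolding d_def using pf pn by (simp add: inner_add_right)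
  have wd: "(w \<bullet> f) *\<^sub>R f + (w \<bullet> n) *\<^sub>R n = sqrt ((w \<bullet> f)*(w \<bullet> f) + (w \<bullet> n)*(w \<bullet> n)) *\<^sub>R d"
    if "w \<in> W'" for w
  proof -
    have wW: "w \<in> W" and w0: "(w \<bullet> f)*(w \<bullet> f) + (w \<bullet> n)*(w \<bullet> n) > 0" using that unfolding W'_def by auto
    define \<sigma> where "\<sigma> = sqrt ((w \<bullet> f)*(w \<bullet> f) + (w \<bullet> n)*(w \<bullet> n))"
    note cw = cs_of[OF w0, folded \<sigma>_def]
    have k: "(w \<bullet> f) / \<sigma> = c0" using all that unfolding kk_def c0_def \<sigma>_def \<rho>_def by simp
    have "(w \<bullet> n) / \<sigma> = s0" unfolding \<sigma>_def s0_def \<rho>_def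
      by (rule K2) (use Yge wW qW q0 w0 k in \<open>auto simp: \<sigma>_def c0_def \<rho>_def\<close>)
    hence "w \<bullet> f = \<sigma> * c0" "w \<bullet> n = \<sigma> * s0" using cw k by auto
    thus ?thesis unfolding d_def \<sigma>_def[symmetric] by (simp add: scaleR_add_right)
  qed
  have WH: "W \<subseteq> HP p d"
  proof
    fix w assume w: "w \<in> W"
    show "w \<in> HP p d"
    proof (cases "w \<in> W'")
      case True
      hence "w = (w \<bullet> p) *\<^sub>R p + sqrt ((w \<bullet> f)*(w \<bullet> f) + (w \<bullet> n)*(w \<bullet> n)) *\<^sub>R d"
        using dec[of w] wd[OF True] by (simp add: add.assoc)
      thus ?thesis unfolding HP_def by fastforce
    next
      case False
      hence "w = (w \<bullet> p) *\<^sub>R p + 0 *\<^sub>R d" using dec[of w] notW'[OF w] by simp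
      thus ?thesis unfolding HP_def by fastforce
    qed
  qed
  have "q = (q \<bullet> p) *\<^sub>R p + \<rho> *\<^sub>R d" using dec[of q] wd[OF q] unfolding \<rho>_def by (simp add: add.assoc)
  hence dC: "d \<in> cone_of W"
    by (rule dir_in[OF memW[OF qW]]) (use lin[of "- (q \<bullet> p)"] cq(1) in simp_all)
  have C: "cone_of W = HP p d"
    by (rule cone_of_eq[OF fW cc_HP WH]) (auto simp: HP_def intro!: cone_of_add lin cone_of_scale dC)
  have "- d \<notin> HP p d"
  proof
    assume "- d \<in> HP p d"
    then obtain a b where ab: "b \<ge> 0" "- d = a *\<^sub>R p + b *\<^sub>R d" unfolding HP_def by blast
    have "(- d) \<bullet> d = a * (p \<bullet> d) + b * (d \<bullet> d)" unfolding ab(2) by (simp add: inner_add_left)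
    hence "- 1 = b" using pd dd by simp
    thus False using ab(1) by simp
  qed
  moreover have "d \<in> HP p d" unfolding HP_def by (rule CollectI, rule exI[of _ 0], rule exI[of _ 1]) simp
  ultimately have "\<not> subspace (cone_of W)" using not_subspace_by C by metis
  hence "S = nrm (HP p d)" using adm_ns[OF ad] C by simp
  thus ?thesis unfolding shapes_def using nrm_semi[OF np nd pd] by simp
qed

end


lemma cramer:
  fixes a1 b1 a2 b2 x y D :: real
  assumes "D = a1*b2 - b1*a2" "D \<noteq> 0"
  shows "((x*b2 - y*a2)/D)*a1 + ((a1*y - b1*x)/D)*a2 = x"
    "((x*b2 - y*a2)/D)*b1 + ((a1*y - b1*x)/D)*b2 = y"
proof -
  have "((x*b2 - y*a2)/D)*a1 + ((a1*y - b1*x)/D)*a2 = ((x*b2 - y*a2)*a1 + (a1*y - b1*x)*a2)/D"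
    by (simp add: add_divide_distrib)
  also have "(x*b2 - y*a2)*a1 + (a1*y - b1*x)*a2 = x * D" by (simp add: assms(1) algebra_simps)
  finally show "((x*b2 - y*a2)/D)*a1 + ((a1*y - b1*x)/D)*a2 = x" using assms(2) by simp
  have "((x*b2 - y*a2)/D)*b1 + ((a1*y - b1*x)/D)*b2 = ((x*b2 - y*a2)*b1 + (a1*y - b1*x)*b2)/D"
    by (simp add: add_divide_distrib)
  also have "(x*b2 - y*a2)*b1 + (a1*y - b1*x)*b2 = y * D" by (simp add: assms(1) algebra_simps)
  finally show "((x*b2 - y*a2)/D)*b1 + ((a1*y - b1*x)/D)*b2 = y" using assms(2) by simp
qed

context actx
begin

lemma sph_qrz:
  assumes "q \<in> W" "r \<in> W" "norm z = 1" "z \<bullet> f = 0" "z \<bullet> n = 0"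
    "(q \<bullet> f) * (r \<bullet> n) - (q \<bullet> n) * (r \<bullet> f) \<noteq> 0"
  shows "sph_indep q r z"
proof -
  have nq: "norm q = 1" "norm r = 1" using assms(1,2) Ws by auto
  have "q \<noteq> r" using assms(6) by auto
  moreover have "q \<noteq> z" "r \<noteq> z" using assms(4-6) by auto
  moreover have "independent {q, r, z}"
  proof (rule indep3I)
    show "q \<noteq> r" "q \<noteq> z" "r \<noteq> z" by fact+
    fix \<alpha> \<beta> \<gamma> assume e: "\<alpha> *\<^sub>R q + \<beta> *\<^sub>R r + \<gamma> *\<^sub>R z = 0"
    have "(\<alpha> *\<^sub>R q + \<beta> *\<^sub>R r + \<gamma> *\<^sub>R z) \<bullet> f = \<alpha> * (q \<bullet> f) + \<beta> * (r \<bullet> f)"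
      "(\<alpha> *\<^sub>R q + \<beta> *\<^sub>R r + \<gamma> *\<^sub>R z) \<bullet> n = \<alpha> * (q \<bullet> n) + \<beta> * (r \<bullet> n)"
      using assms(4,5) by (simp_all add: inner_add_left)
    hence e1: "\<alpha> * (q \<bullet> f) + \<beta> * (r \<bullet> f) = 0" "\<alpha> * (q \<bullet> n) + \<beta> * (r \<bullet> n) = 0" using e by simp_all
    have "\<alpha> * ((q \<bullet> f) * (r \<bullet> n) - (q \<bullet> n) * (r \<bullet> f)) =
        (r \<bullet> n) * (\<alpha> * (q \<bullet> f) + \<beta> * (r \<bullet> f)) - (r \<bullet> f) * (\<alpha> * (q \<bullet> n) + \<beta> * (r \<bullet> n))"
      by (simp add: algebra_simps)
    hence a0: "\<alpha> = 0" using e1 assms(6) by simp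
    have "\<beta> * ((q \<bullet> f) * (r \<bullet> n) - (q \<bullet> n) * (r \<bullet> f)) =
        (q \<bullet> f) * (\<alpha> * (q \<bullet> n) + \<beta> * (r \<bullet> n)) - (q \<bullet> n) * (\<alpha> * (q \<bullet> f) + \<beta> * (r \<bullet> f))"
      by (simp add: algebra_simps)
    hence b0: "\<beta> = 0" using e1 assms(6) by simp
    hence "\<gamma> *\<^sub>R z = 0" using e a0 by simp
    hence "\<gamma> = 0" using assms(3) by auto
    thus "\<alpha> = 0 \<and> \<beta> = 0 \<and> \<gamma> = 0" using a0 b0 by simp
  qed
  ultimately show ?thesis unfolding sph_indep_def using nq assms(3) by simp
qed

lemma case_lune:
  assumes q: "q \<in> W'" and r: "r \<in> W'"
    and ext: "\<forall>w\<in>W'. kk (r \<bullet> f) (r \<bullet> n) \<le> kk (w \<bullet> f) (w \<bullet> n) \<and> kk (w \<bullet> f) (w \<bullet> n) \<le> kk (q \<bullet> f) (q \<bullet> n)"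
    and Dp: "(q \<bullet> f) * (r \<bullet> n) - (q \<bullet> n) * (r \<bullet> f) > 0"
  shows "shapes S"
proof -
  have qW: "q \<in> W" and rW: "r \<in> W" using q r unfolding W'_def by auto
  define D where "D = (q \<bullet> f) * (r \<bullet> n) - (q \<bullet> n) * (r \<bullet> f)"
  have D0: "D > 0" using Dp D_def by simp
  have WK: "W \<subseteq> K4 p q r"
  proof
    fix w assume wW: "w \<in> W"
    define \<beta> where "\<beta> = ((w \<bullet> f) * (r \<bullet> n) - (w \<bullet> n) * (r \<bullet> f)) / D"
    define \<gamma> where "\<gamma> = ((q \<bullet> f) * (w \<bullet> n) - (q \<bullet> n) * (w \<bullet> f)) / D"
    define \<alpha> where "\<alpha> = (w \<bullet> p) - \<beta> * (q \<bullet> p) - \<gamma> * (r \<bullet> p)"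
    have num: "(w \<bullet> f) * (r \<bullet> n) - (w \<bullet> n) * (r \<bullet> f) \<ge> 0 \<and> (q \<bullet> f) * (w \<bullet> n) - (q \<bullet> n) * (w \<bullet> f) \<ge> 0"
    proof (cases "w \<in> W'")
      case True
      have w0: "(w \<bullet> f)*(w \<bullet> f) + (w \<bullet> n)*(w \<bullet> n) > 0" using True unfolding W'_def by simp
      have r0: "(r \<bullet> f)*(r \<bullet> f) + (r \<bullet> n)*(r \<bullet> n) > 0" using r unfolding W'_def by simp
      have q0: "(q \<bullet> f)*(q \<bullet> f) + (q \<bullet> n)*(q \<bullet> n) > 0" using q unfolding W'_def by simp
      have "(w \<bullet> f) * (r \<bullet> n) - (w \<bullet> n) * (r \<bullet> f) \<ge> 0"
        by (rule K1) (use Yge wW rW w0 r0 ext True in \<open>auto simp: kk_def\<close>)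
      moreover have "(q \<bullet> f) * (w \<bullet> n) - (q \<bullet> n) * (w \<bullet> f) \<ge> 0"
        by (rule K1) (use Yge wW qW w0 q0 ext True in \<open>auto simp: kk_def\<close>)
      ultimately show ?thesis by simp
    next
      case False
      thus ?thesis using notW'[OF wW] by simp
    qed
    have b0: "\<beta> \<ge> 0" "\<gamma> \<ge> 0" unfolding \<beta>_def \<gamma>_def using num D0 by simp_all
    note cr = cramer[OF D_def, of "w \<bullet> f" "w \<bullet> n"]
    have id1: "\<beta> * (q \<bullet> f) + \<gamma> * (r \<bullet> f) = w \<bullet> f"
      unfolding \<beta>_def \<gamma>_def using cr(1) D0 by simp
    have id2: "\<beta> * (q \<bullet> n) + \<gamma> * (r \<bullet> n) = w \<bullet> n"
      unfolding \<beta>_def \<gamma>_def using cr(2) D0 by simp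
    have "\<alpha> *\<^sub>R p + \<beta> *\<^sub>R q + \<gamma> *\<^sub>R r = (w \<bullet> p) *\<^sub>R p + (w \<bullet> f) *\<^sub>R f + (w \<bullet> n) *\<^sub>R n"
      by (rule comb_id[OF dec[of q] dec[of r]]) (use id1 id2 \<alpha>_def in simp_all)
    hence "w = \<alpha> *\<^sub>R p + \<beta> *\<^sub>R q + \<gamma> *\<^sub>R r" using dec[of w] by simp
    thus "w \<in> K4 p q r" unfolding K4_def using b0 by blast
  qed
  have C: "cone_of W = K4 p q r"
    by (rule cone_of_eq[OF fW cc_K4 WK])
       (auto simp: K4_def intro!: cone_of_add lin cone_of_scale[OF memW[OF qW]] cone_of_scale[OF memW[OF rW]])
  have "q \<bullet> n > 0 \<or> r \<bullet> n > 0"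
  proof (rule ccontr)
    assume "\<not> (q \<bullet> n > 0 \<or> r \<bullet> n > 0)"
    hence "q \<bullet> n = 0" "r \<bullet> n = 0" using Yge qW rW by (auto simp: order.order_iff_strict)
    thus False using Dp by simp
  qed
  hence ns: "\<not> subspace (cone_of W)" using notsub_by qW rW by blast
  have KU: "K4 p q r = cone3 q r p \<union> cone3 q r (- p)"
  proof
    show "K4 p q r \<subseteq> cone3 q r p \<union> cone3 q r (- p)"
    proof
      fix x assume "x \<in> K4 p q r"
      then obtain a b c where x: "x = a *\<^sub>R p + b *\<^sub>R q + c *\<^sub>R r" "b \<ge> 0" "c \<ge> 0" unfolding K4_def by blast
      show "x \<in> cone3 q r p \<union> cone3 q r (- p)"
      proof (cases "a \<ge> 0")
        case True
        have "x = b *\<^sub>R q + c *\<^sub>R r + a *\<^sub>R p" using x(1) by (simp add: algebra_simps)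
        thus ?thesis using cone3_mem[OF x(2,3) True, of q r p] by simp
      next
        case False
        hence "- a \<ge> 0" by simp
        have "x = b *\<^sub>R q + c *\<^sub>R r + (- a) *\<^sub>R (- p)" using x(1) by (simp add: algebra_simps)
        thus ?thesis using cone3_mem[OF x(2,3) \<open>- a \<ge> 0\<close>, of q r "- p"] by simp
      qed
    qed
    show "cone3 q r p \<union> cone3 q r (- p) \<subseteq> K4 p q r"
    proof
      fix x assume "x \<in> cone3 q r p \<union> cone3 q r (- p)"
      then obtain a b c where x: "x = b *\<^sub>R q + c *\<^sub>R r + a *\<^sub>R p \<or> x = b *\<^sub>R q + c *\<^sub>R r + a *\<^sub>R (- p)" "b \<ge> 0" "c \<ge> 0"
        unfolding cone3_def by blast
      hence "x = a *\<^sub>R p + b *\<^sub>R q + c *\<^sub>R r \<or> x = (- a) *\<^sub>R p + b *\<^sub>R q + c *\<^sub>R r"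
        by (auto simp: algebra_simps)
      thus "x \<in> K4 p q r" unfolding K4_def using x(2,3) by blast
    qed
  qed
  have mpn: "norm (- p) = 1" "(- p) \<bullet> f = 0" "(- p) \<bullet> n = 0" using np pf pn by simp_all
  have si1: "sph_indep q r p" using sph_qrz[OF qW rW np pf pn] Dp by simp
  have si2: "sph_indep q r (- p)" using sph_qrz[OF qW rW mpn] Dp by simp
  have "S = nrm (K4 p q r)" using adm_ns[OF ad ns] C by simp
  hence S: "S = geo_tri q r p \<union> geo_tri q r (- p)" using KU nrm_Un nrm_tri si1 si2 by simp
  have D': "D = (q \<bullet> f) * (r \<bullet> n) - (r \<bullet> f) * (q \<bullet> n)" unfolding D_def by simp
  note cr = cramer[OF D', of "- (q \<bullet> p)" "- (r \<bullet> p)"]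
  define b0 where "b0 = ((- (q \<bullet> p)) * (r \<bullet> n) - (- (r \<bullet> p)) * (q \<bullet> n)) / D"
  define c0 where "c0 = ((q \<bullet> f) * (- (r \<bullet> p)) - (r \<bullet> f) * (- (q \<bullet> p))) / D"
  define m where "m = p + b0 *\<^sub>R f + c0 *\<^sub>R n"
  have mq: "m \<bullet> q = (q \<bullet> p) + b0 * (q \<bullet> f) + c0 * (q \<bullet> n)"
  proof -
    have "m \<bullet> q = q \<bullet> m" by (rule inner_commute)
    also have "\<dots> = (q \<bullet> p) + b0 * (q \<bullet> f) + c0 * (q \<bullet> n)" unfolding m_def by (simp add: inner_add_right)
    finally show ?thesis .
  qed
  have mr: "m \<bullet> r = (r \<bullet> p) + b0 * (r \<bullet> f) + c0 * (r \<bullet> n)"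
  proof -
    have "m \<bullet> r = r \<bullet> m" by (rule inner_commute)
    also have "\<dots> = (r \<bullet> p) + b0 * (r \<bullet> f) + c0 * (r \<bullet> n)" unfolding m_def by (simp add: inner_add_right)
    finally show ?thesis .
  qed
  have "b0 * (q \<bullet> f) + c0 * (q \<bullet> n) = - (q \<bullet> p)" unfolding b0_def c0_def using cr(1) D0 by simp
  hence "m \<bullet> q = 0" unfolding mq by simp
  moreover have "b0 * (r \<bullet> f) + c0 * (r \<bullet> n) = - (r \<bullet> p)" unfolding b0_def c0_def using cr(2) D0 by simp
  hence "m \<bullet> r = 0" unfolding mr by simp
  moreover have "m \<bullet> p = 1" unfolding m_def using ip by (simp add: inner_add_left)
  ultimately have "two_adjacent_geodesic_triangles S"
    unfolding two_adjacent_geodesic_triangles_def S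
    by (intro exI[of _ q] exI[of _ r] exI[of _ p] exI[of _ "- p"] exI[of _ m]) (simp add: si1 si2)
  thus ?thesis unfolding shapes_def by simp
qed

lemma case_flat:
  assumes q: "q \<in> W" and r: "r \<in> W"
    and qr: "q \<bullet> n = 0" "r \<bullet> n = 0" "q \<bullet> f > 0" "r \<bullet> f < 0"
  shows "shapes S"
proof -
  have "q = (q \<bullet> p) *\<^sub>R p + (q \<bullet> f) *\<^sub>R f" using dec[of q] qr by simp
  hence fC: "f \<in> cone_of W"
    by (rule dir_in[OF memW[OF q]]) (use lin[of "- (q \<bullet> p)"] qr in simp_all)
  have "r = (r \<bullet> p) *\<^sub>R p + (- (r \<bullet> f)) *\<^sub>R (- f)" using dec[of r] qr by simp
  hence mfC: "- f \<in> cone_of W"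
    by (rule dir_in[OF memW[OF r]]) (use lin[of "- (r \<bullet> p)"] qr in simp_all)
  have linf: "a *\<^sub>R f \<in> cone_of W" for a using line_in[OF fC mfC] .
  show ?thesis
  proof (cases "\<exists>w\<in>W. w \<bullet> n > 0")
    case True
    then obtain w where w: "w \<in> W" "w \<bullet> n > 0" by blast
    have "w = ((w \<bullet> p) *\<^sub>R p + (w \<bullet> f) *\<^sub>R f) + (w \<bullet> n) *\<^sub>R n" using dec[of w] .
    moreover have "- ((w \<bullet> p) *\<^sub>R p + (w \<bullet> f) *\<^sub>R f) \<in> cone_of W"
    proof -
      have "(- (w \<bullet> p)) *\<^sub>R p + (- (w \<bullet> f)) *\<^sub>R f \<in> cone_of W" by (intro cone_of_add lin linf)
      thus ?thesis by (simp add: algebra_simps)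
    qed
    ultimately have nC: "n \<in> cone_of W" using dir_in[OF memW[OF w(1)]] w(2) by blast
    have C: "cone_of W = {x. x \<bullet> n \<ge> 0}"
    proof
      show "cone_of W \<subseteq> {x. x \<bullet> n \<ge> 0}" using posC by blast
      show "{x. x \<bullet> n \<ge> 0} \<subseteq> cone_of W"
      proof
        fix x assume x: "x \<in> {x. x \<bullet> n \<ge> 0}"
        have "(x \<bullet> p) *\<^sub>R p + (x \<bullet> f) *\<^sub>R f + (x \<bullet> n) *\<^sub>R n \<in> cone_of W"
          using x by (intro cone_of_add lin linf cone_of_scale nC) auto
        thus "x \<in> cone_of W" using dec[of x] by simp
      qed
    qed
    have "S = nrm {x. x \<bullet> n \<ge> 0}" using adm_ns[OF ad notsub_by[OF w]] C by simp
    thus ?thesis unfolding shapes_def using nrm_hemi[OF nn] by simp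
  next
    case False
    hence Y0: "w \<in> W \<Longrightarrow> w \<bullet> n = 0" for w using Yge[of w] by force
    have WP: "W \<subseteq> PL p f"
    proof
      fix w assume "w \<in> W"
      hence "w = (w \<bullet> p) *\<^sub>R p + (w \<bullet> f) *\<^sub>R f" using dec[of w] Y0 by simp
      thus "w \<in> PL p f" unfolding PL_def by blast
    qed
    have C: "cone_of W = PL p f"
      by (rule cone_of_eq[OF fW cc_PL WP]) (auto simp: PL_def intro!: cone_of_add lin linf)
    have sub: "subspace (cone_of W)" unfolding C subspace_convex_cone_symmetric
    proof (intro conjI cc_PL ballI)
      fix x assume "x \<in> PL p f"
      then obtain a b where "x = a *\<^sub>R p + b *\<^sub>R f" unfolding PL_def by blast
      hence "- x = (- a) *\<^sub>R p + (- b) *\<^sub>R f" by simp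
      thus "- x \<in> PL p f" unfolding PL_def by blast
    qed
    then obtain h where h: "norm h = 1" "\<forall>c\<in>cone_of W. h \<bullet> c = 0"
      "S = nrm {c + \<tau> *\<^sub>R h | c \<tau>. c \<in> cone_of W \<and> \<tau> \<ge> 0}"
      using adm_s[OF ad] by blast
    have "S = nrm {x. x \<bullet> h \<ge> 0}"
      using h(3) hemi_of_plane[OF sub Cp(1) fC np nf pf h(1,2)] by simp
    thus ?thesis unfolding shapes_def using nrm_hemi[OF h(1)] by simp
  qed
qed

end


lemma caseA:
  assumes fW: "finite W" and Ws: "W \<subseteq> sphere 0 1" and pW: "p \<in> W" and mpW: "- p \<in> W"
    and ad: "adm W S"
  shows "shapes S"
proof -
  obtain n where nn: "norm n = 1" and pos: "\<forall>c\<in>cone_of W. n \<bullet> c \<ge> 0"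
    using get_normal[OF fW ad] by blast
  have "n \<bullet> p \<ge> 0" "n \<bullet> (- p) \<ge> 0" using pos cone_of_mem[OF fW] pW mpW by blast+
  hence "n \<bullet> p = 0" by simp
  hence pn: "p \<bullet> n = 0" by (simp add: inner_commute)
  have np: "norm p = 1" using Ws pW by auto
  define f where "f = cross3 n p"
  have "(norm f)\<^sup>2 = (norm n)\<^sup>2 * (norm p)\<^sup>2 - (n \<bullet> p)\<^sup>2" unfolding f_def by (rule norm_cross)
  hence "(norm f)\<^sup>2 = 1" using nn np \<open>n \<bullet> p = 0\<close> by simp
  hence "norm f = 1 \<or> norm f = - 1" by (simp add: power2_eq_1_iff)
  hence nf: "norm f = 1" using norm_ge_zero[of f] by linarith
  have "f \<bullet> p = 0" unfolding f_def by (rule dot_cross_self(3))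
  hence pf: "p \<bullet> f = 0" by (simp add: inner_commute)
  have "n \<bullet> f = 0" unfolding f_def by (rule dot_cross_self(1))
  hence fn: "f \<bullet> n = 0" by (simp add: inner_commute)
  interpret A: actx W S p f n
    by (unfold_locales) (use fW Ws pW mpW ad np nf nn pf pn fn pos in auto)
  show ?thesis
  proof (cases "A.W' = {}")
    case True
    thus ?thesis by (rule A.case_line)
  next
    case False
    have fin: "finite A.W'" using fW unfolding A.W'_def by simp
    define g where "g w = kk (w \<bullet> f) (w \<bullet> n)" for w
    obtain q where q: "q \<in> A.W'" "\<forall>w\<in>A.W'. g w \<le> g q"
    proof -
      have "Max (g ` A.W') \<in> g ` A.W'" using fin False by simp
      then obtain q where "q \<in> A.W'" "g q = Max (g ` A.W')" by auto
      moreover have "\<forall>w\<in>A.W'. g w \<le> Max (g ` A.W')" using fin by simp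
      ultimately show ?thesis using that by auto
    qed
    obtain r where r: "r \<in> A.W'" "\<forall>w\<in>A.W'. g r \<le> g w"
    proof -
      have "Min (g ` A.W') \<in> g ` A.W'" using fin False by simp
      then obtain r where "r \<in> A.W'" "g r = Min (g ` A.W')" by auto
      moreover have "\<forall>w\<in>A.W'. Min (g ` A.W') \<le> g w" using fin by simp
      ultimately show ?thesis using that by auto
    qed
    have qW: "q \<in> W" and q0: "(q \<bullet> f)*(q \<bullet> f) + (q \<bullet> n)*(q \<bullet> n) > 0" using q(1) unfolding A.W'_def by auto
    have rW: "r \<in> W" and r0: "(r \<bullet> f)*(r \<bullet> f) + (r \<bullet> n)*(r \<bullet> n) > 0" using r(1) unfolding A.W'_def by auto
    show ?thesis
    proof (cases "g q = g r")
      case True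
      have "\<forall>w\<in>A.W'. g w = g q" using q(2) r(2) True by (metis order.antisym)
      thus ?thesis using A.case_dir[OF q(1)] unfolding g_def by blast
    next
      case False
      hence lt: "g r < g q" using q(2) r(1) by (metis order.not_eq_order_implies_strict)
      have D0: "(q \<bullet> f) * (r \<bullet> n) - (q \<bullet> n) * (r \<bullet> f) \<ge> 0"
        by (rule K1) (use A.Yge qW rW q0 r0 lt in \<open>auto simp: g_def kk_def\<close>)
      show ?thesis
      proof (cases "(q \<bullet> f) * (r \<bullet> n) - (q \<bullet> n) * (r \<bullet> f) > 0")
        case True
        show ?thesis by (rule A.case_lune[OF q(1) r(1) _ True]) (use q(2) r(2) in \<open>auto simp: g_def\<close>)
      next
        case False
        hence "(q \<bullet> f) * (r \<bullet> n) - (q \<bullet> n) * (r \<bullet> f) = 0" using D0 by simp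
        hence "q \<bullet> n = 0 \<and> r \<bullet> n = 0 \<and> q \<bullet> f > 0 \<and> r \<bullet> f < 0"
          by (intro K3) (use A.Yge qW rW q0 r0 lt in \<open>auto simp: g_def kk_def\<close>)
        thus ?thesis using A.case_flat[OF qW rW] by blast
      qed
    qed
  qed
qed

theorem lemma5p6:
  fixes \<epsilon> :: real and \<Omega> :: "(real^2) set" and u :: "real^2 \<Rightarrow> real^3"
    and R :: "(real^2) set" and S :: "(real^3) set"
  assumes "\<epsilon> > 0" and "bounded \<Omega>" and "open \<Omega>"
    and "u \<in> SF \<epsilon> \<Omega>" and "R \<in> regions \<epsilon> u"
    and "admissible_surface \<epsilon> u R S"
  shows "semi_great_circle S \<or> geodesic_arc S \<or> geodesic_triangle S \<or>
         two_adjacent_geodesic_triangles S \<or> hemisphere S"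
proof -
  define W where "W = u ` lattice_in \<epsilon> R"
  have ad: "adm W S" unfolding W_def by (rule adm_of[OF assms(6)])
  have Ws: "W \<subseteq> sphere 0 1" unfolding W_def by (rule W_sphere[OF assms(4)])
  have cb: "(\<exists>p. p \<in> W \<and> - p \<in> W) \<or> (\<exists>a b c. W = {a,b,c})"
    unfolding W_def by (rule comb[OF assms(1,5)])
  have "shapes S"
  proof (cases "finite W")
    case False
    thus ?thesis using caseInf ad by blast
  next
    case True
    show ?thesis
    proof (cases "\<exists>p. p \<in> W \<and> - p \<in> W")
      case True
      then obtain p where "p \<in> W" "- p \<in> W" by blast
      thus ?thesis using caseA[OF \<open>finite W\<close> Ws _ _ ad] by blast
    next
      case False
      then obtain a b c where W3: "W = {a,b,c}" using cb by blast
      have "\<forall>x\<in>W. \<forall>y\<in>W. x \<noteq> - y" using False by (metis minus_minus)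
      thus ?thesis using caseB[OF W3 Ws _ ad] by blast
    qed
  qed
  thus ?thesis unfolding shapes_def .
qed


end
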